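(* Let $w$, $w_1$, $w_2$ be binary words, and let $p_1<p_2<\dots<p_k$ be all lost positions of $w$. Then $1<p_1$ and $p_k<|w|$, and there is a monotonically increasing injective mapping \[\mu:\{p_1,\dots,p_k\}\to\{1,2,\dots,|w|-1\}\] such that for all $i=1,\dots,k$, the position $|w_1|+\mu(p_i)$ is lost in the word $w_1ww_2$ and $\mu(p_i)\le p_i$.
   Context: Words are finite sequences over $\{0,1\}$; $w[i..j]=w[i]\cdots w[j]$; $\bar c$ denotes the letter different from $c$. A period of $w$ is $p\ge1$ with $w[i+p]=w[i]$ for all $1\le i\le|w|-p$. A run of $w$ is an interval $[i..j]$, $1\le i<j\le|w|$, such that with $p$ the least period of $w[i..j]$: $j-i+1\ge 2p$, ($i=1$ or $w[i-1]\ne w[i-1+p]$), and ($j=|w|$ or $w[j+1]\ne w[j+1-p]$). For $c\in\{0,1\}$, $<_c$ is the lexicographic order on words from the letter order $0<_01$, resp. $1<_10$ (proper prefixes are smaller). A nonempty word $x$ is $<$-Lyndon if for every factorization $x=yz$, $y,z$ nonempty, $x\neq zy$ and $x<zy$. For a position $1<i\le|w|$ define: $c_w(i)=\overline{w[i-1]}$; $L_w(i)=\max\{j: w[i..j]$ is $<_{c_w(i)}$-Lyndon$\}$; $D_w(i)=L_w(i)-i+1$; $S_w(i)=\min\{j: D_w(i)$ is a period of $w[j..L_w(i)]\}$; $E_w(i)=\max\{j: D_w(i)$ is a period of $w[i..j]\}$; $R_w(i)=[S_w(i)..E_w(i)]$. For a run $r=[s..e]$ of $w$ with $e=|w|$ and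 $c\in\{0,1\}$ let $r_w(c)=\min\{i: R_w(i)=r$ and $w[i..L_w(i)]$ is $<_c$-Lyndon$\}$, and let $f_w(r)\in\{0,1\}$ be such that $r_w(f_w(r))\ge r_w(\overline{f_w(r)})$, with $f_w(r)=0$ if the period of $w[s..e]$ is one. A position $1<i\le|w|$ is lost in $w$ iff one of: (i) $E_w(i)<|w|$, $S_w(i)>1$ and $R_w(i)$ is not a run; (ii) $E_w(i)<|w|$, $R_w(i)$ is a run, and $i+D_w(i)\le E_w(i)$; (iii) $E_w(i)=|w|$, $R_w(i)$ is a run $r$, $i+D_w(i)\le E_w(i)$, $S_w(i)<i$, and $w[i..L_w(i)]$ is $<_{f_w(r)}$-Lyndon. *)

theory Defs
  imports "HOL-Library.Extended_Nat"
begin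

text \<open>Binary words: lists over bool, with letter 0 = False and 1 = True.
  Positions are 1-based: letter at position i is w ! (i - 1).\<close>

type_synonym word = "bool list"

definition letter :: "word \<Rightarrow> nat \<Rightarrow> bool" where
  "letter w i = w ! (i - 1)"

text \<open>Factor w[i..j] (1-based, inclusive); empty if j < i.\<close>
definition fac :: "word \<Rightarrow> nat \<Rightarrow> nat \<Rightarrow> word" where
  "fac w i j = take (Suc j - i) (drop (i - 1) w)"

definition is_period :: "word \<Rightarrow> nat \<Rightarrow> bool" where
  "is_period w p \<longleftrightarrow> p \<ge> 1 \<and> (\<forall>i. 1 \<le> i \<and> i + p \<le> length w \<longrightarrow> letter w (i + p) = letter w i)"

definition least_period :: "word \<Rightarrow> nat" where
  "least_period w = (LEAST p. is_period w p)"

definition is_run :: "word \<Rightarrow> nat \<Rightarrow> nat \<Rightarrow> bool" where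
  "is_run w i j \<longleftrightarrow> 1 \<le> i \<and> i < j \<and> j \<le> length w \<and>
     (let p = least_period (fac w i j) in
        j - i + 1 \<ge> 2 * p \<and>
        (i = 1 \<or> letter w (i - 1) \<noteq> letter w (i - 1 + p)) \<and>
        (j = length w \<or> letter w (j + 1) \<noteq> letter w (j + 1 - p)))"

text \<open>Lexicographic order induced by the letter order in which c is the smallest letter;
  proper prefixes are smaller.\<close>
definition lex_less :: "bool \<Rightarrow> word \<Rightarrow> word \<Rightarrow> bool" where
  "lex_less c x y \<longleftrightarrow>
     (\<exists>u. u \<noteq> [] \<and> y = x @ u) \<or>
     (\<exists>u v v'. x = u @ c # v \<and> y = u @ (\<not> c) # v')"

definition lyndon :: "bool \<Rightarrow> word \<Rightarrow> bool" where
  "lyndon c x \<longleftrightarrow> x \<noteq> [] \<and>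
     (\<forall>y z. y \<noteq> [] \<longrightarrow> z \<noteq> [] \<longrightarrow> x = y @ z \<longrightarrow> x \<noteq> z @ y \<and> lex_less c x (z @ y))"

definition cw :: "word \<Rightarrow> nat \<Rightarrow> bool" where
  "cw w i = (\<not> letter w (i - 1))"

definition Lw :: "word \<Rightarrow> nat \<Rightarrow> nat" where
  "Lw w i = Max {j. i \<le> j \<and> j \<le> length w \<and> lyndon (cw w i) (fac w i j)}"

definition Dw :: "word \<Rightarrow> nat \<Rightarrow> nat" where
  "Dw w i = Lw w i - i + 1"

definition Sw :: "word \<Rightarrow> nat \<Rightarrow> nat" where
  "Sw w i = (LEAST j. 1 \<le> j \<and> is_period (fac w j (Lw w i)) (Dw w i))"

definition Ew :: "word \<Rightarrow> nat \<Rightarrow> nat" where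
  "Ew w i = Max {j. i \<le> j \<and> j \<le> length w \<and> is_period (fac w i j) (Dw w i)}"

definition rw :: "word \<Rightarrow> nat \<Rightarrow> nat \<Rightarrow> bool \<Rightarrow> enat" where
  "rw w s e c =
     (let A = {i. 1 < i \<and> i \<le> length w \<and> Sw w i = s \<and> Ew w i = e \<and> lyndon c (fac w i (Lw w i))}
      in if A = {} then \<infinity> else enat (Min A))"

definition fw :: "word \<Rightarrow> nat \<Rightarrow> nat \<Rightarrow> bool" where
  "fw w s e = (if least_period (fac w s e) = 1 \<or> rw w s e False \<ge> rw w s e True then False else True)"

definition lost :: "word \<Rightarrow> nat \<Rightarrow> bool" where
  "lost w i \<longleftrightarrow> 1 < i \<and> i \<le> length w \<and>
     ((Ew w i < length w \<and> Sw w i > 1 \<and> \<not> is_run w (Sw w i) (Ew w i)) \<or>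
      (Ew w i < length w \<and> is_run w (Sw w i) (Ew w i) \<and> i + Dw w i \<le> Ew w i) \<or>
      (Ew w i = length w \<and> is_run w (Sw w i) (Ew w i) \<and> i + Dw w i \<le> Ew w i \<and> Sw w i < i \<and>
         lyndon (fw w (Sw w i) (Ew w i)) (fac w i (Lw w i))))"

end

theory Submission
  imports Defs
begin

definition MM :: "bool \<Rightarrow> bool list \<Rightarrow> nat \<Rightarrow> bool" where
  "MM c v q \<longleftrightarrow> (\<exists>t. t + q < length v \<and> (\<forall>s<t. v!(s+q) = v!s) \<and> v!t = c \<and> v!(t+q) = (\<not>c))"

lemma lex_less_eqlen:
  assumes "lex_less c x y" "length x = length y"
  shows "\<exists>t<length x. (\<forall>s<t. x!s = y!s) \<and> x!t = c \<and> y!t = (\<not>c)"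
proof -
  from assms(1) consider (a) u where "u \<noteq> []" "y = x @ u" | (b) u v v' where "x = u @ c # v" "y = u @ (\<not>c) # v'"
    unfolding lex_less_def by blast
  then show ?thesis
  proof cases
    case a then show ?thesis using assms(2) by simp
  next
    case b
    show ?thesis
      apply (rule exI[of _ "length u"])
      using b by (auto simp: nth_append)
  qed
qed

lemma lex_lessI:
  assumes "t < length x" "t < length y" "\<forall>s<t. x!s = y!s" "x!t = c" "y!t = (\<not>c)"
  shows "lex_less c x y"
proof -
  have tx: "take t x = take t y" using assms(1,2,3) by (intro nth_equalityI) auto
  have "x = take t x @ x!t # drop (Suc t) x" using assms(1) by (rule id_take_nth_drop)
  then have "x = take t x @ c # drop (Suc t) x" using assms(4) by simp
  moreover have "y = take t y @ y!t # drop (Suc t) y" using assms(2) by (rule id_take_nth_drop)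
  then have "y = take t x @ (\<not>c) # drop (Suc t) y" using assms(5) tx by simp
  ultimately show ?thesis unfolding lex_less_def by blast
qed

lemma lyndon_MM:
  assumes L: "lyndon c v" and q: "0 < q" "q < length v"
  shows "MM c v q"
proof -
  define y where "y = take q v"
  define z where "z = drop q v"
  have v: "v = y @ z" by (simp add: y_def z_def)
  have ly: "length y = q" using q by (simp add: y_def)
  have lz: "length z = length v - q" by (simp add: z_def)
  have yne: "y \<noteq> []" "z \<noteq> []" using q ly lz by auto
  from L yne v have ne1: "v \<noteq> z @ y" and lt1: "lex_less c v (z @ y)" unfolding lyndon_def by blast+
  have zy1: "\<And>s. s < length v - q \<Longrightarrow> (z@y)!s = v!(s+q)"
    using lz by (simp add: nth_append z_def add.commute)
  have zy2: "\<And>s. length v - q \<le> s \<Longrightarrow> s < length v \<Longrightarrow> (z@y)!s = v!(s - (length v - q))"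
    using lz q by (simp add: nth_append y_def)
  obtain t1 where t1: "t1 < length v" "\<forall>s<t1. v!s = (z@y)!s" "v!t1 = c" "(z@y)!t1 = (\<not>c)"
    using lex_less_eqlen[OF lt1] lz ly q by auto
  show ?thesis
  proof (cases "\<exists>s. s + q < length v \<and> v!(s+q) \<noteq> v!s")
    case True
    define t where "t = (LEAST s. s + q < length v \<and> v!(s+q) \<noteq> v!s)"
    have t: "t + q < length v" "v!(t+q) \<noteq> v!t" using LeastI_ex[OF True] unfolding t_def by blast+
    have tmin: "\<And>s. s < t \<Longrightarrow> v!(s+q) = v!s"
    proof -
      fix s assume "s < t"
      then have "\<not> (s + q < length v \<and> v!(s+q) \<noteq> v!s)" unfolding t_def using not_less_Least by blast
      then show "v!(s+q) = v!s" using \<open>s<t\<close> t(1) by auto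
    qed
    have "t1 = t"
    proof (rule ccontr)
      assume "t1 \<noteq> t"
      then consider "t1 < t" | "t < t1" by linarith
      then show False
      proof cases
        case 1
        then have "(z@y)!t1 = v!(t1+q)" using zy1 t(1) by auto
        also have "\<dots> = v!t1" using tmin 1 by auto
        finally show False using t1 by auto
      next
        case 2
        then have "v!t = (z@y)!t" using t1 by auto
        also have "\<dots> = v!(t+q)" using zy1 t(1) by auto
        finally show False using t by auto
      qed
    qed
    then show ?thesis unfolding MM_def using t tmin t1 zy1 by (intro exI[of _ t]) auto
  next
    case False
    then have per: "\<And>s. s + q < length v \<Longrightarrow> v!(s+q) = v!s" by blast
    define p where "p = length v - q"
    define t' where "t' = drop p v"
    have zt: "z = take p v" using per unfolding z_def p_def by (intro nth_equalityI) (auto simp: add.commute)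
    have v2: "v = z @ t'" using zt t'_def by simp
    have lt': "length t' = q" using q by (simp add: t'_def p_def)
    have "t' \<noteq> []" using lt' q by auto
    with L yne v2 have lt2: "lex_less c v (t' @ z)" unfolding lyndon_def by blast
    obtain t2 where t2: "t2 < length v" "\<forall>s<t2. v!s = (t'@z)!s" "v!t2 = c" "(t'@z)!t2 = (\<not>c)"
      using lex_less_eqlen[OF lt2] lz lt' q by auto
    have tz2: "\<And>s. q \<le> s \<Longrightarrow> s < length v \<Longrightarrow> (t'@z)!s = v!s"
      using lt' by (simp add: nth_append z_def)
    have t2q: "t2 < q" using t2 tz2[of t2] by (cases "q \<le> t2") auto
    have t1p: "p \<le> t1"
    proof (rule ccontr)
      assume "\<not> p \<le> t1"
      then have "(z@y)!t1 = v!t1" using zy1 per[of t1] p_def by auto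
      then show False using t1 by auto
    qed
    define a where "a = t1 - p"
    have aq: "a < q" using t1 p_def a_def q by auto
    have A1: "\<And>s. s < a \<Longrightarrow> t'!s = v!s"
    proof -
      fix s assume "s < a"
      have "t'!s = v!(p+s)" using t'_def p_def aq \<open>s<a\<close> by simp
      also have "\<dots> = (z@y)!(p+s)" using t1 \<open>s<a\<close> a_def by auto
      also have "\<dots> = v!(p+s - (length v - q))" using zy2[of "p+s"] p_def \<open>s<a\<close> aq q by auto
      also have "\<dots> = v!s" using p_def by simp
      finally show "t'!s = v!s" .
    qed
    have A2: "t'!a = c" using t1 a_def t'_def p_def t1p aq by simp
    have A3: "v!a = (\<not>c)" using t1 zy2[of t1] a_def p_def t1p by auto
    have B1: "\<And>s. s < t2 \<Longrightarrow> t'!s = v!s" using t2 t2q lt' by (auto simp: nth_append)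
    have B2: "t'!t2 = (\<not>c)" using t2 t2q lt' by (simp add: nth_append)
    show ?thesis
    proof (cases "a < t2")
      case True then show ?thesis using B1[of a] A2 A3 by auto
    next
      case False
      then consider "t2 < a" | "t2 = a" by linarith
      then show ?thesis
      proof cases
        case 1 then show ?thesis using A1[of t2] B2 t2 by auto
      next
        case 2 then show ?thesis using A2 B2 by auto
      qed
    qed
  qed
qed

lemma MM_lyndon:
  assumes "v \<noteq> []" "\<And>q. 0 < q \<Longrightarrow> q < length v \<Longrightarrow> MM c v q"
  shows "lyndon c v"
  unfolding lyndon_def
proof (intro conjI allI impI)
  show "v \<noteq> []" by fact
  fix y z assume yz: "y \<noteq> []" "z \<noteq> []" "v = y @ z"
  define q where "q = length y"
  have q: "0 < q" "q < length v" using yz q_def by auto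
  obtain t where t: "t + q < length v" "\<forall>s<t. v!(s+q) = v!s" "v!t = c" "v!(t+q) = (\<not>c)"
    using assms(2)[OF q] unfolding MM_def by blast
  have zy: "\<And>s. s < length z \<Longrightarrow> (z@y)!s = v!(s+q)" using yz q_def by (simp add: nth_append add.commute)
  have tz: "t < length z" using t yz q_def by simp
  have e1: "(z@y)!t = (\<not>c)" using zy[OF tz] t by simp
  have e2: "\<forall>s<t. v!s = (z@y)!s" using zy tz t by auto
  show "lex_less c v (z@y)"
    using lex_lessI[of t v "z@y" c] t(1,3) tz e1 e2 by auto
  show "v \<noteq> z@y" using zy[OF tz] t by auto
qed

lemma lyndon_iff_MM: "lyndon c v \<longleftrightarrow> v \<noteq> [] \<and> (\<forall>q. 0 < q \<longrightarrow> q < length v \<longrightarrow> MM c v q)"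
  using lyndon_MM MM_lyndon lyndon_def by blast

definition pp :: "word \<Rightarrow> nat \<Rightarrow> nat \<Rightarrow> nat \<Rightarrow> bool" where
  "pp w D x y \<longleftrightarrow> (\<forall>k. x \<le> k \<longrightarrow> k + D \<le> y \<longrightarrow> letter w k = letter w (k + D))"

definition MMw :: "word \<Rightarrow> bool \<Rightarrow> nat \<Rightarrow> nat \<Rightarrow> nat \<Rightarrow> bool" where
  "MMw w c i j q \<longleftrightarrow> (\<exists>k. i \<le> k \<and> k + q \<le> j \<and> (\<forall>x. i \<le> x \<longrightarrow> x < k \<longrightarrow> letter w (x+q) = letter w x)
      \<and> letter w k = c \<and> letter w (k+q) = (\<not>c))"

lemma fac_length: "1 \<le> i \<Longrightarrow> j \<le> length w \<Longrightarrow> length (fac w i j) = Suc j - i"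
  unfolding fac_def by auto

lemma fac_nth: "1 \<le> i \<Longrightarrow> j \<le> length w \<Longrightarrow> s < Suc j - i \<Longrightarrow> fac w i j ! s = letter w (i + s)"
  unfolding fac_def letter_def by (auto simp: add.commute)

lemma LY_iff:
  assumes "1 \<le> i" "i \<le> j" "j \<le> length w"
  shows "lyndon c (fac w i j) \<longleftrightarrow> (\<forall>q. 0 < q \<longrightarrow> q \<le> j - i \<longrightarrow> MMw w c i j q)"
proof -
  have len: "length (fac w i j) = Suc j - i" using fac_length assms by auto
  have nth: "\<And>s. s < Suc j - i \<Longrightarrow> fac w i j ! s = letter w (i + s)" using fac_nth assms by auto
  have eq: "MM c (fac w i j) q \<longleftrightarrow> MMw w c i j q" if q: "0 < q" "q \<le> j - i" for q
  proof
    assume "MM c (fac w i j) q"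
    then obtain t where t: "t + q < Suc j - i" "\<forall>s<t. fac w i j!(s+q) = fac w i j!s"
       "fac w i j!t = c" "fac w i j!(t+q) = (\<not>c)" unfolding MM_def len by blast
    show "MMw w c i j q" unfolding MMw_def
    proof (intro exI[of _ "i+t"] conjI allI impI)
      show "i \<le> i + t" by simp
      show "i + t + q \<le> j" using t(1) by linarith
      fix x assume x: "i \<le> x" "x < i + t"
      have xt: "x - i < t" using x by linarith
      have "fac w i j!((x - i)+q) = fac w i j!(x-i)" using t(2)[rule_format, OF xt] .
      then show "letter w (x + q) = letter w x" using nth[of "x-i+q"] nth[of "x-i"] x t(1) by auto
    next
      show "letter w (i + t) = c" using t(3) nth[of t] t(1) by auto
      show "letter w (i + t + q) = (\<not>c)" using t(4) nth[of "t+q"] t(1) by (auto simp: add.assoc)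
    qed
  next
    assume "MMw w c i j q"
    then obtain k where k: "i \<le> k" "k + q \<le> j" "\<forall>x. i \<le> x \<longrightarrow> x < k \<longrightarrow> letter w (x+q) = letter w x"
      "letter w k = c" "letter w (k+q) = (\<not>c)" unfolding MMw_def by blast
    show "MM c (fac w i j) q" unfolding MM_def len
    proof (intro exI[of _ "k-i"] conjI allI impI)
      show "k - i + q < Suc j - i" using k by linarith
      fix s assume s: "s < k - i"
      have "letter w (i+s+q) = letter w (i+s)" using k(3) s by auto
      then show "fac w i j ! (s + q) = fac w i j ! s" using nth[of "s+q"] nth[of s] s k by (auto simp: add.assoc)
    next
      show "fac w i j ! (k - i) = c" using nth[of "k-i"] k by auto
      show "fac w i j ! (k - i + q) = (\<not>c)" using nth[of "k-i+q"] k by auto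
    qed
  qed
  have ne: "fac w i j \<noteq> []" using len assms by auto
  show ?thesis unfolding lyndon_iff_MM using eq ne len by auto
qed

lemma is_period_fac:
  assumes "1 \<le> x" "y \<le> length w"
  shows "is_period (fac w x y) D \<longleftrightarrow> 1 \<le> D \<and> pp w D x y"
proof -
  have len: "length (fac w x y) = Suc y - x" using fac_length assms by auto
  have lt: "letter (fac w x y) i = letter w (x + i - 1)" if "1 \<le> i" "i \<le> Suc y - x" for i
    unfolding letter_def[of "fac w x y"] using fac_nth[OF assms, of "i - 1"] that by (simp add: letter_def)
  show ?thesis
  proof
    assume P: "is_period (fac w x y) D"
    show "1 \<le> D \<and> pp w D x y" unfolding pp_def
    proof (intro conjI allI impI)
      show "1 \<le> D" using P is_period_def by auto
      fix k assume k: "x \<le> k" "k + D \<le> y"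
      have pre: "1 \<le> k - x + 1 \<and> (k - x + 1) + D \<le> length (fac w x y)" using k len by auto
      have "letter (fac w x y) ((k - x + 1) + D) = letter (fac w x y) (k - x + 1)"
        using P pre unfolding is_period_def by blast
      then show "letter w k = letter w (k + D)" using lt[of "k-x+1+D"] lt[of "k-x+1"] k assms by auto
    qed
  next
    assume P: "1 \<le> D \<and> pp w D x y"
    show "is_period (fac w x y) D" unfolding is_period_def
    proof (intro conjI allI impI)
      show "1 \<le> D" using P by auto
      fix i assume i: "1 \<le> i \<and> i + D \<le> length (fac w x y)"
      have "letter w (x + i - 1) = letter w (x + i - 1 + D)" using P i len unfolding pp_def by auto
      moreover have "x + (i + D) - 1 = x + i - 1 + D" using i by simp
      moreover have "letter (fac w x y) (i + D) = letter w (x + (i+D) - 1)" using lt[of "i+D"] i len by auto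
      moreover have "letter (fac w x y) i = letter w (x + i - 1)" using lt[of i] i len by auto
      ultimately show "letter (fac w x y) (i + D) = letter (fac w x y) i" by simp
    qed
  qed
qed

lemma pp_mono: "pp w D a b \<Longrightarrow> a \<le> a' \<Longrightarrow> b' \<le> b \<Longrightarrow> pp w D a' b'"
  unfolding pp_def by auto

lemma pp_union: "pp w D a b \<Longrightarrow> pp w D c d \<Longrightarrow> a \<le> c \<Longrightarrow> c + D \<le> b + 1 \<Longrightarrow> pp w D a d"
  unfolding pp_def
proof (intro allI impI)
  fix k assume P: "\<forall>k. a \<le> k \<longrightarrow> k + D \<le> b \<longrightarrow> letter w k = letter w (k + D)"
    "\<forall>k. c \<le> k \<longrightarrow> k + D \<le> d \<longrightarrow> letter w k = letter w (k + D)" "a \<le> c" "c + D \<le> b + 1"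
    and k: "a \<le> k" "k + D \<le> d"
  show "letter w k = letter w (k + D)"
  proof (cases "k + D \<le> b")
    case True then show ?thesis using P k by auto
  next
    case False then have "c \<le> k" using P by linarith
    then show ?thesis using P k by auto
  qed
qed

lemma pp_mult: "pp w D x y \<Longrightarrow> x \<le> a \<Longrightarrow> a + m * D \<le> y \<Longrightarrow> letter w a = letter w (a + m * D)"
proof (induction m)
  case 0 then show ?case by simp
next
  case (Suc m)
  then have "letter w a = letter w (a + m * D)" by auto
  also have "\<dots> = letter w (a + m * D + D)" using Suc.prems unfolding pp_def by auto
  finally have calc: "letter w a = letter w (a + m * D + D)" .
  have eq: "a + Suc m * D = a + m * D + D" by simp
  show ?case using calc eq by (simp only:)
qed

lemma pp_mod: "pp w D x y \<Longrightarrow> x \<le> a \<Longrightarrow> a \<le> b \<Longrightarrow> b \<le> y \<Longrightarrow> D dvd (b - a) \<Longrightarrow> letter w a = letter w b"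
proof -
  assume A: "pp w D x y" "x \<le> a" "a \<le> b" "b \<le> y" "D dvd (b - a)"
  then obtain m where m: "b - a = D * m" by (auto elim: dvdE)
  then have b: "b = a + m * D" using A by (simp add: mult.commute)
  show ?thesis using pp_mult[OF A(1,2), of m] A b by auto
qed

abbreviation LYw :: "word \<Rightarrow> bool \<Rightarrow> nat \<Rightarrow> nat \<Rightarrow> bool" where
  "LYw w c i j \<equiv> lyndon c (fac w i j)"

lemma LY_single: "1 \<le> i \<Longrightarrow> i \<le> length w \<Longrightarrow> LYw w c i i"
  using LY_iff[of i i w c] by auto

lemma LY_noper: "1 \<le> i \<Longrightarrow> i \<le> j \<Longrightarrow> j \<le> length w \<Longrightarrow> LYw w c i j \<Longrightarrow> 0 < q \<Longrightarrow> q \<le> j - i \<Longrightarrow> \<not> pp w q i j"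
proof
  assume A: "1 \<le> i" "i \<le> j" "j \<le> length w" "LYw w c i j" "0 < q" "q \<le> j - i" "pp w q i j"
  then have "MMw w c i j q" using LY_iff by blast
  then obtain k where k: "i \<le> k" "k + q \<le> j" "letter w k = c" "letter w (k+q) = (\<not>c)" unfolding MMw_def by blast
  have "letter w k = letter w (k + q)" using A(7) k unfolding pp_def by blast
  then show False using k by simp
qed

lemma LY_ends: "1 \<le> i \<Longrightarrow> i < j \<Longrightarrow> j \<le> length w \<Longrightarrow> LYw w c i j \<Longrightarrow> letter w i = c \<and> letter w j = (\<not>c)"
proof -
  assume A: "1 \<le> i" "i < j" "j \<le> length w" "LYw w c i j"
  then have "MMw w c i j (j - i)" using LY_iff[of i j w c] by auto
  then obtain k where k: "i \<le> k" "k + (j - i) \<le> j" "letter w k = c" "letter w (k+(j-i)) = (\<not>c)" unfolding MMw_def by blast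
  then have "k = i" by linarith
  then show ?thesis using k A by auto
qed

lemma LY_both: "1 \<le> i \<Longrightarrow> i < j \<Longrightarrow> j \<le> length w \<Longrightarrow> LYw w c i j \<Longrightarrow> LYw w (\<not>c) i j \<Longrightarrow> False"
  using LY_ends[of i j w c] LY_ends[of i j w "\<not>c"] by auto

lemma LY_both': "1 \<le> i \<Longrightarrow> i < j \<Longrightarrow> j \<le> length w \<Longrightarrow> LYw w c i j \<Longrightarrow> LYw w c' i j \<Longrightarrow> c = c'"
  using LY_both[of i j w c] by (cases c; cases c') auto

lemma fac_transfer:
  assumes "1 \<le> i" "j \<le> length w" "1 \<le> i'" "i' + (j - i) \<le> length w'" "i \<le> j"
    "\<And>s. s \<le> j - i \<Longrightarrow> letter w (i+s) = letter w' (i'+s)"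
  shows "fac w i j = fac w' i' (i' + (j - i))"
proof (rule nth_equalityI)
  show "length (fac w i j) = length (fac w' i' (i' + (j - i)))"
    using fac_length assms by (metis Suc_diff_le add_diff_cancel_left' le_add1 le_add_diff_inverse) 
  fix s assume "s < length (fac w i j)"
  then have s: "s < Suc j - i" using fac_length assms by auto
  have "fac w i j ! s = letter w (i + s)" using fac_nth assms s by auto
  also have "\<dots> = letter w' (i' + s)" using assms(6) s by auto
  also have "\<dots> = fac w' i' (i' + (j - i)) ! s" using fac_nth[of i' "i' + (j - i)" w' s] assms s by auto
  finally show "fac w i j ! s = fac w' i' (i' + (j - i)) ! s" .
qed

definition Lset :: "word \<Rightarrow> nat \<Rightarrow> nat set" where
  "Lset w i = {j. i \<le> j \<and> j \<le> length w \<and> lyndon (cw w i) (fac w i j)}"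

lemma Lw_Lset: "Lw w i = Max (Lset w i)" unfolding Lw_def Lset_def by simp

lemma Lset_fin: "finite (Lset w i)" unfolding Lset_def by (rule finite_subset[of _ "{..length w}"]) auto

lemma Lw_props:
  assumes "1 \<le> i" "i \<le> length w"
  shows "i \<le> Lw w i" "Lw w i \<le> length w" "LYw w (cw w i) i (Lw w i)"
proof -
  have "i \<in> Lset w i" unfolding Lset_def using LY_single assms by auto
  then have ne: "Lset w i \<noteq> {}" by auto
  have "Lw w i \<in> Lset w i" unfolding Lw_Lset using Max_in[OF Lset_fin ne] .
  then show "i \<le> Lw w i" "Lw w i \<le> length w" "LYw w (cw w i) i (Lw w i)" unfolding Lset_def by auto
qed

lemma Lw_max:
  assumes "1 \<le> i" "i \<le> length w" "Lw w i < j" "j \<le> length w"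
  shows "\<not> LYw w (cw w i) i j"
proof
  assume "LYw w (cw w i) i j"
  then have "j \<in> Lset w i" unfolding Lset_def using assms Lw_props(1)[OF assms(1,2)] by auto
  then have "j \<le> Lw w i" unfolding Lw_Lset using Max_ge[OF Lset_fin] by auto
  then show False using assms by auto
qed

lemma Lw_eqI:
  assumes "1 \<le> i" "i \<le> m" "m \<le> length w" "LYw w (cw w i) i m"
    "\<And>j. m < j \<Longrightarrow> j \<le> length w \<Longrightarrow> \<not> LYw w (cw w i) i j"
  shows "Lw w i = m"
  unfolding Lw_Lset
proof (rule Max_eqI[OF Lset_fin])
  show "m \<in> Lset w i" unfolding Lset_def using assms by auto
  fix y assume "y \<in> Lset w i"
  then have "y \<le> length w" "LYw w (cw w i) i y" unfolding Lset_def by auto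
  then show "y \<le> m" using assms(5)[of y] by (meson not_le)
qed

lemma Dw_pos: "Dw w i \<ge> 1" unfolding Dw_def by simp

lemma Lw_Dw: "1 \<le> i \<Longrightarrow> i \<le> length w \<Longrightarrow> Lw w i = i + Dw w i - 1"
  using Lw_props(1)[of i w] unfolding Dw_def by auto

lemma pp_root: "pp w (Dw w i) i (Lw w i)"
  unfolding pp_def Dw_def by auto

lemma Sw_P:
  assumes "1 \<le> i" "i \<le> length w"
  shows "(1 \<le> j \<and> is_period (fac w j (Lw w i)) (Dw w i)) \<longleftrightarrow> 1 \<le> j \<and> pp w (Dw w i) j (Lw w i)"
  using is_period_fac[of j "Lw w i" w "Dw w i"] Lw_props[OF assms] Dw_pos by auto

lemma Sw_props:
  assumes "1 \<le> i" "i \<le> length w"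
  shows "1 \<le> Sw w i" "Sw w i \<le> i" "pp w (Dw w i) (Sw w i) (Lw w i)"
    "Sw w i = 1 \<or> letter w (Sw w i - 1) \<noteq> letter w (Sw w i - 1 + Dw w i)"
proof -
  define P where "P j \<longleftrightarrow> 1 \<le> j \<and> is_period (fac w j (Lw w i)) (Dw w i)" for j
  have SP: "Sw w i = (LEAST j. P j)" unfolding Sw_def P_def by simp
  have Pi: "P j \<longleftrightarrow> 1 \<le> j \<and> pp w (Dw w i) j (Lw w i)" for j unfolding P_def using Sw_P[OF assms] by blast
  have "P i" unfolding Pi using pp_root assms by auto
  then have PS: "P (Sw w i)" unfolding SP by (rule LeastI)
  show "Sw w i \<le> i" unfolding SP using \<open>P i\<close> by (rule Least_le)
  have ppS: "pp w (Dw w i) (Sw w i) (Lw w i)" and S1: "1 \<le> Sw w i" using PS unfolding Pi by auto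
  show "1 \<le> Sw w i" "pp w (Dw w i) (Sw w i) (Lw w i)" using ppS S1 by auto
  show "Sw w i = 1 \<or> letter w (Sw w i - 1) \<noteq> letter w (Sw w i - 1 + Dw w i)"
  proof (cases "Sw w i = 1")
    case True then show ?thesis by simp
  next
    case False
    assume "Sw w i \<noteq> 1"
    then have lt: "Sw w i - 1 < Sw w i" "1 \<le> Sw w i - 1" using S1 by auto
    have "\<not> P (Sw w i - 1)" using not_less_Least[of "Sw w i - 1" P] lt(1) unfolding SP by blast
    then have "\<not> pp w (Dw w i) (Sw w i - 1) (Lw w i)" using Pi lt by auto
    then obtain k where k: "Sw w i - 1 \<le> k" "k + Dw w i \<le> Lw w i" "letter w k \<noteq> letter w (k + Dw w i)"
      unfolding pp_def by blast
    have "\<not> Sw w i \<le> k"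
    proof
      assume "Sw w i \<le> k"
      then have "letter w k = letter w (k + Dw w i)" using ppS k(2) unfolding pp_def by blast
      then show False using k(3) by simp
    qed
    then have "k = Sw w i - 1" using k by linarith
    then show ?thesis using k by simp
  qed
qed

lemma Sw_le:
  assumes "1 \<le> i" "i \<le> length w" "1 \<le> x" "pp w (Dw w i) x (Lw w i)"
  shows "Sw w i \<le> x"
  unfolding Sw_def using Sw_P[OF assms(1,2), of x] assms by (intro Least_le) auto

lemma Sw_eqI:
  assumes "1 \<le> i" "i \<le> length w" "1 \<le> x" "x \<le> i" "pp w (Dw w i) x (Lw w i)"
    "x = 1 \<or> letter w (x - 1) \<noteq> letter w (x - 1 + Dw w i)"
  shows "Sw w i = x"
proof -
  have le: "Sw w i \<le> x" using Sw_le assms by auto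
  show ?thesis
  proof (rule ccontr)
    assume "Sw w i \<noteq> x"
    then have lt: "Sw w i < x" using le by auto
    then have x1: "x \<noteq> 1" using Sw_props(1)[OF assms(1,2)] by auto
    have "Sw w i \<le> x - 1" "x - 1 + Dw w i \<le> Lw w i" using lt assms Lw_Dw[OF assms(1,2)] by auto
    then have "letter w (x - 1) = letter w (x - 1 + Dw w i)" using Sw_props(3)[OF assms(1,2)] unfolding pp_def by blast
    then show False using assms(6) x1 by auto
  qed
qed

definition Eset :: "word \<Rightarrow> nat \<Rightarrow> nat set" where
  "Eset w i = {j. i \<le> j \<and> j \<le> length w \<and> is_period (fac w i j) (Dw w i)}"

lemma Ew_Eset: "Ew w i = Max (Eset w i)" unfolding Ew_def Eset_def by simp
lemma Eset_fin: "finite (Eset w i)" unfolding Eset_def by (rule finite_subset[of _ "{..length w}"]) auto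

lemma Eset_iff:
  assumes "1 \<le> i"
  shows "j \<in> Eset w i \<longleftrightarrow> i \<le> j \<and> j \<le> length w \<and> pp w (Dw w i) i j"
  unfolding Eset_def using is_period_fac[of i j w "Dw w i"] assms Dw_pos by auto

lemma Ew_props:
  assumes "1 \<le> i" "i \<le> length w"
  shows "Lw w i \<le> Ew w i" "Ew w i \<le> length w" "pp w (Dw w i) i (Ew w i)"
    "Ew w i = length w \<or> letter w (Ew w i + 1) \<noteq> letter w (Ew w i + 1 - Dw w i)"
proof -
  have L: "Lw w i \<in> Eset w i" unfolding Eset_iff[OF assms(1)] using Lw_props[OF assms] pp_root by auto
  then have ne: "Eset w i \<noteq> {}" by auto
  have EM: "Ew w i \<in> Eset w i" unfolding Ew_Eset using Max_in[OF Eset_fin ne] .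
  show "Lw w i \<le> Ew w i" unfolding Ew_Eset using Max_ge[OF Eset_fin L] .
  show "Ew w i \<le> length w" "pp w (Dw w i) i (Ew w i)" using EM Eset_iff[OF assms(1)] by auto
  show "Ew w i = length w \<or> letter w (Ew w i + 1) \<noteq> letter w (Ew w i + 1 - Dw w i)"
  proof (cases "Ew w i = length w")
    case True then show ?thesis by simp
  next
    case False
    assume ne: "Ew w i \<noteq> length w"
    have "Ew w i + 1 \<notin> Eset w i" using Max_ge[OF Eset_fin, of "Ew w i + 1" w i] unfolding Ew_Eset by auto
    then have "\<not> pp w (Dw w i) i (Ew w i + 1)" using Eset_iff[OF assms(1)] EM ne by auto
    then obtain k where k: "i \<le> k" "k + Dw w i \<le> Ew w i + 1" "letter w k \<noteq> letter w (k + Dw w i)"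
      unfolding pp_def by blast
    have "\<not> k + Dw w i \<le> Ew w i" using EM Eset_iff[OF assms(1)] k unfolding pp_def by blast
    then have k1: "k + Dw w i = Ew w i + 1" using k by linarith
    then have k2: "Ew w i + 1 - Dw w i = k" by simp
    show ?thesis unfolding k2 k1[symmetric] using k(3) by simp
  qed
qed

lemma Ew_ge:
  assumes "1 \<le> i" "i \<le> y" "y \<le> length w" "pp w (Dw w i) i y"
  shows "y \<le> Ew w i"
  unfolding Ew_Eset using Max_ge[OF Eset_fin] Eset_iff[OF assms(1)] assms by auto

lemma Ew_eqI:
  assumes "1 \<le> i" "i \<le> length w" "Lw w i \<le> y" "y \<le> length w" "pp w (Dw w i) i y"
    "y = length w \<or> letter w (y + 1) \<noteq> letter w (y + 1 - Dw w i)"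
  shows "Ew w i = y"
proof (rule ccontr)
  assume "Ew w i \<noteq> y"
  moreover have "y \<le> Ew w i" using Ew_ge assms Lw_props(1)[OF assms(1,2)] by auto
  ultimately have lt: "y < Ew w i" by auto
  then have yn: "y \<noteq> length w" using Ew_props(2)[OF assms(1,2)] by auto
  have "i \<le> y + 1 - Dw w i" "y + 1 - Dw w i + Dw w i \<le> Ew w i"
    using lt assms(3) Lw_Dw[OF assms(1,2)] by auto
  then have "letter w (y + 1 - Dw w i) = letter w (y + 1 - Dw w i + Dw w i)"
    using Ew_props(3)[OF assms(1,2)] unfolding pp_def by blast
  moreover have "y + 1 - Dw w i + Dw w i = y + 1" using assms(3) Lw_Dw[OF assms(1,2)] by auto
  ultimately show False using assms(6) yn by auto
qed

lemma SE_pp: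
  assumes "1 \<le> i" "i \<le> length w"
  shows "pp w (Dw w i) (Sw w i) (Ew w i)"
  by (rule pp_union[OF Sw_props(3)[OF assms] Ew_props(3)[OF assms] Sw_props(2)[OF assms]])
     (use Lw_Dw[OF assms] in simp)

lemma D_lp:
  assumes "1 \<le> i" "i \<le> length w"
  shows "least_period (fac w (Sw w i) (Ew w i)) = Dw w i"
proof -
  let ?f = "fac w (Sw w i) (Ew w i)"
  have per: "is_period ?f (Dw w i)" using is_period_fac[of "Sw w i" "Ew w i" w "Dw w i"]
    Sw_props[OF assms] Ew_props[OF assms] SE_pp[OF assms] Dw_pos by auto
  have le: "least_period ?f \<le> Dw w i" unfolding least_period_def using per by (rule Least_le)
  have lp: "is_period ?f (least_period ?f)" unfolding least_period_def using per by (rule LeastI)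
  then have lp1: "1 \<le> least_period ?f" "pp w (least_period ?f) (Sw w i) (Ew w i)"
    using is_period_fac[of "Sw w i" "Ew w i" w] Sw_props[OF assms] Ew_props[OF assms] by auto
  show ?thesis
  proof (rule ccontr)
    assume "least_period ?f \<noteq> Dw w i"
    then have lt: "least_period ?f < Dw w i" using le by auto
    have "pp w (least_period ?f) i (Lw w i)"
      using pp_mono[OF lp1(2)] Sw_props(2)[OF assms] Ew_props(1)[OF assms] by auto
    moreover have "\<not> pp w (least_period ?f) i (Lw w i)"
      by (rule LY_noper[OF assms(1) Lw_props(1,2,3)[OF assms]])
         (use lt lp1 Lw_Dw[OF assms] in auto)
    ultimately show False by simp
  qed
qed

lemma RUN_iff:
  assumes "1 \<le> i" "i \<le> length w"
  shows "is_run w (Sw w i) (Ew w i) \<longleftrightarrow> 2 * Dw w i \<le> Ew w i - Sw w i + 1"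
proof -
  have S: "1 \<le> Sw w i" "Sw w i \<le> i" "Sw w i = 1 \<or> letter w (Sw w i - 1) \<noteq> letter w (Sw w i - 1 + Dw w i)"
    using Sw_props[OF assms] by auto
  have E: "Lw w i \<le> Ew w i" "Ew w i \<le> length w"
    "Ew w i = length w \<or> letter w (Ew w i + 1) \<noteq> letter w (Ew w i + 1 - Dw w i)"
    using Ew_props[OF assms] by auto
  have L: "i \<le> Lw w i" using Lw_props[OF assms] by auto
  have D1: "1 \<le> Dw w i" by (rule Dw_pos)
  show ?thesis
    unfolding is_run_def Let_def D_lp[OF assms]
    using S E L D1 by auto
qed

lemma LR:
  assumes "1 \<le> j" "j + D - 1 \<le> e" "e \<le> length w" "1 \<le> D"
    "LYw w (cw w j) j (j + D - 1)" "pp w D j e"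
    "e = length w \<or> (letter w (e+1) = cw w j \<and> letter w (e + 1 - D) \<noteq> cw w j)"
  shows "Lw w j = j + D - 1"
proof (rule Lw_eqI)
  show "1 \<le> j" "j \<le> j + D - 1" "j + D - 1 \<le> length w" "LYw w (cw w j) j (j + D - 1)"
    using assms by auto
  fix m assume m: "j + D - 1 < m" "m \<le> length w"
  show "\<not> LYw w (cw w j) j m"
  proof
    assume "LYw w (cw w j) j m"
    then have "MMw w (cw w j) j m D" using LY_iff[of j m w "cw w j"] m assms by auto
    then obtain k where k: "j \<le> k" "k + D \<le> m" "\<forall>x. j \<le> x \<longrightarrow> x < k \<longrightarrow> letter w (x+D) = letter w x"
      "letter w k = cw w j" "letter w (k+D) = (\<not> cw w j)" unfolding MMw_def by blast
    show False
    proof (cases "k + D \<le> e")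
      case True
      then have "letter w k = letter w (k + D)" using assms(6) k(1) unfolding pp_def by blast
      then show False using k by simp
    next
      case False
      then have en: "e \<noteq> length w" using k m by auto
      then have br: "letter w (e+1) = cw w j" "letter w (e + 1 - D) \<noteq> cw w j" using assms(7) by auto
      have "k = e + 1 - D"
      proof (rule ccontr)
        assume "k \<noteq> e + 1 - D"
        then have "e + 1 - D < k" using False by linarith
        moreover have "j \<le> e + 1 - D" using assms by linarith
        ultimately have "letter w (e + 1 - D + D) = letter w (e + 1 - D)" using k(3) by blast
        moreover have "e + 1 - D + D = e + 1" using assms by linarith
        ultimately show False using br by simp
      qed
      moreover have "e + 1 - D + D = e + 1" using assms by linarith
      ultimately show False using k(5) br by simp
    qed
  qed
qed

lemma RS:
  assumes "1 \<le> i" "i \<le> length w" "1 \<le> j" "j \<le> length w" "Sw w i \<le> j"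
    "Lw w j = j + Dw w i - 1" "j + Dw w i - 1 \<le> Ew w i"
  shows "Dw w j = Dw w i" "Sw w j = Sw w i" "Ew w j = Ew w i"
proof -
  show D: "Dw w j = Dw w i" unfolding Dw_def[of w j] using assms(6) Dw_pos[of w i] by simp
  have pp: "pp w (Dw w i) (Sw w i) (Ew w i)" by (rule SE_pp[OF assms(1,2)])
  show "Sw w j = Sw w i"
    by (rule Sw_eqI[OF assms(3,4)]) (use Sw_props[OF assms(1,2)] pp_mono[OF pp] assms D in auto)
  show "Ew w j = Ew w i"
    by (rule Ew_eqI[OF assms(3,4)]) (use Ew_props[OF assms(1,2)] pp_mono[OF pp] assms D in auto)
qed

lemma sameR_D:
  assumes "1 \<le> i" "i \<le> length w" "1 \<le> j" "j \<le> length w" "Sw w j = Sw w i" "Ew w j = Ew w i"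
  shows "Dw w j = Dw w i"
  using D_lp[OF assms(1,2)] D_lp[OF assms(3,4)] assms(5,6) by simp

lemma Ly3:
  assumes i: "1 \<le> i" "i \<le> L" "L \<le> E" "E + 1 \<le> length w"
    and ly: "LYw w c i L" and Dd: "D = L - i + 1" and per: "pp w D i E"
    and bc: "letter w (E + 1 - D) = c" "letter w (E + 1) = (\<not>c)"
  shows "LYw w c i (E + 1)"
proof -
  define m where "m = E + 1"
  have D1: "1 \<le> D" "D \<le> E" using Dd i by auto
  have cm: "letter w (m - D) = c" "letter w m = (\<not>c)" using bc unfolding m_def by auto
  show ?thesis unfolding m_def[symmetric]
  proof (subst LY_iff, (use i m_def in auto)[3], intro allI impI)
    fix q assume q: "0 < q" "q \<le> m - i"
    show "MMw w c i m q"
    proof (cases "D dvd q")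
      case True
      then have qD: "D \<le> q" using q by (simp add: dvd_imp_le)
      show ?thesis unfolding MMw_def
      proof (intro exI[of _ "m - q"] conjI allI impI)
        show "i \<le> m - q" "m - q + q \<le> m" using q by auto
        fix x assume x: "i \<le> x" "x < m - q"
        show "letter w (x + q) = letter w x"
          using pp_mod[OF per, of x "x+q"] x True m_def by auto
      next
        have "letter w (m - q) = letter w (m - D)"
          by (rule pp_mod[OF per]) (use q qD m_def D1 True in \<open>auto simp: dvd_diff_nat\<close>)
        then show "letter w (m - q) = c" using cm by simp
        show "letter w (m - q + q) = (\<not>c)" using cm q i m_def by simp
      qed
    next
      case False
      define r where "r = q mod D"
      have "q mod D \<noteq> 0" using False by (simp add: dvd_eq_mod_eq_0)
      then have r: "0 < r" "r < D" using D1 unfolding r_def by auto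
      have qr: "q - r = D * (q div D)" unfolding r_def by (simp add: minus_mod_eq_mult_div)
      have rq: "r \<le> q" unfolding r_def by simp
      have "MMw w c i L r" using LY_iff[of i L w c] ly i r Dd by auto
      then obtain k0 where k0: "i \<le> k0" "k0 + r \<le> L" "\<forall>x. i \<le> x \<longrightarrow> x < k0 \<longrightarrow> letter w (x+r) = letter w x"
        "letter w k0 = c" "letter w (k0+r) = (\<not>c)" unfolding MMw_def by blast
      have H: "letter w (x + r) = letter w (x + q)" if "i \<le> x" "x + q \<le> E" for x
        by (rule pp_mod[OF per]) (use that rq qr in auto)
      show ?thesis
      proof (cases "k0 + q \<le> E")
        case True
        show ?thesis unfolding MMw_def
        proof (intro exI[of _ k0] conjI allI impI)
          show "i \<le> k0" "k0 + q \<le> m" using k0 True m_def by auto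
          fix x assume x: "i \<le> x" "x < k0"
          have "letter w (x + q) = letter w (x + r)" using H[of x] x True by auto
          also have "\<dots> = letter w x" using k0(3) x by auto
          finally show "letter w (x + q) = letter w x" .
        next
          show "letter w k0 = c" by (rule k0(4))
          have "letter w (k0 + q) = letter w (k0 + r)" using H[of k0] k0 True by auto
          then show "letter w (k0 + q) = (\<not>c)" using k0(5) by simp
        qed
      next
        case False
        show ?thesis unfolding MMw_def
        proof (intro exI[of _ "m - q"] conjI allI impI)
          show "i \<le> m - q" "m - q + q \<le> m" using q by auto
          fix x assume x: "i \<le> x" "x < m - q"
          have "letter w (x + q) = letter w (x + r)" using H[of x] x m_def by auto
          also have "\<dots> = letter w x" using k0(3) x False m_def by auto
          finally show "letter w (x + q) = letter w x" .
        next
          show "letter w (m - q + q) = (\<not>c)" using cm q by auto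
          show "letter w (m - q) = c"
          proof (cases "m - q = k0")
            case True then show ?thesis using k0 by simp
          next
            case neq: False
            then have lt: "m - q < k0" using False m_def by auto
            have iq: "i \<le> m - q" using q by auto
            have e1: "letter w (m - q + r) = letter w (m - q)" using k0(3)[rule_format, OF iq lt] .
            have qD: "D \<le> q"
            proof (rule ccontr)
              assume "\<not> D \<le> q"
              then have "r = q" unfolding r_def by simp
              then show False using lt k0(2) i q m_def by linarith
            qed
            have "letter w (m - q + r) = letter w (m - D)"
            proof (rule pp_mod[OF per])
              show "i \<le> m - q + r" using q by auto
              have "0 < q div D" using qD D1 by (simp add: div_greater_zero_iff)
              then have "D * 1 \<le> D * (q div D)" by (intro mult_le_mono2) simp
              then have "D \<le> q - r" using qr by simp
              then show "m - q + r \<le> m - D" using q rq by linarith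
              show "m - D \<le> E" using D1 m_def by auto
              show "D dvd (m - D - (m - q + r))"
              proof -
                have "m - D - (m - q + r) = (q - r) - D" using q qD rq r m_def D1 by auto
                also have "\<dots> = D * (q div D - 1)" using qr by (simp add: diff_mult_distrib2)
                finally show ?thesis by simp
              qed
            qed
            then show ?thesis using e1 cm by simp
          qed
        qed
      qed
    qed
  qed
qed

lemma UNIQ:
  assumes per: "pp w D s e" and ab: "s \<le> a" "a < b" "b < a + D" "b + D - 1 \<le> e" "e \<le> length w" "1 \<le> s"
    and D2: "2 \<le> D" and la: "LYw w c a (a + D - 1)" and lb: "LYw w c b (b + D - 1)"
  shows False
proof -
  define q where "q = b - a"
  define q' where "q' = D - q"
  have q: "0 < q" "q \<le> (a + D - 1) - a" "0 < q'" "q' \<le> (b + D - 1) - b" "q + q' = D"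
    using ab D2 unfolding q_def q'_def by auto
  have "MMw w c a (a + D - 1) q" using LY_iff[of a "a + D - 1" w c] la q ab D2 by auto
  then obtain k where k: "a \<le> k" "k + q \<le> a + D - 1" "\<forall>x. a \<le> x \<longrightarrow> x < k \<longrightarrow> letter w (x+q) = letter w x"
    "letter w k = c" "letter w (k+q) = (\<not>c)" unfolding MMw_def by blast
  have "MMw w c b (b + D - 1) q'" using LY_iff[of b "b + D - 1" w c] lb q ab D2 by auto
  then obtain k' where k': "b \<le> k'" "k' + q' \<le> b + D - 1" "\<forall>x. b \<le> x \<longrightarrow> x < k' \<longrightarrow> letter w (x+q') = letter w x"
    "letter w k' = c" "letter w (k'+q') = (\<not>c)" unfolding MMw_def by blast
  define y0 where "y0 = k' - q"
  have bq: "b = a + q" using ab unfolding q_def by auto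
  have y0: "a \<le> y0" "y0 + q = k'" "y0 + D = k' + q'" using k' bq q unfolding y0_def by auto
  have PD: "letter w y = letter w (y + D)" if "s \<le> y" "y + D \<le> e" for y
    using per that unfolding pp_def by blast
  have A1: "letter w (y + q) = letter w y" if y: "a \<le> y" "y < y0" for y
  proof -
    have "letter w (y + q + q') = letter w (y + q)" using k'(3) y y0 bq by auto
    moreover have "y + q + q' = y + D" using q by simp
    moreover have "letter w y = letter w (y + D)" using PD[of y] y y0 k' ab by auto
    ultimately show ?thesis by simp
  qed
  have A2: "letter w (y0 + q) = c" using y0 k' by simp
  have A3: "letter w y0 = (\<not>c)" using PD[of y0] y0 k' ab by auto
  show False
  proof (cases "k < y0")
    case True then show False using A1[of k] k by auto
  next
    case False
    then consider "y0 < k" | "y0 = k" by linarith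
    then show False
    proof cases
      case 1 then show False using k(3) y0 A2 A3 by auto
    next
      case 2 then show False using k(4) A3 by simp
    qed
  qed
qed

definition rset :: "word \<Rightarrow> nat \<Rightarrow> nat \<Rightarrow> bool \<Rightarrow> nat set" where
  "rset w s e c = {i. 1 < i \<and> i \<le> length w \<and> Sw w i = s \<and> Ew w i = e \<and> lyndon c (fac w i (Lw w i))}"

lemma rw_rset: "rw w s e c = (if rset w s e c = {} then \<infinity> else enat (Min (rset w s e c)))"
  unfolding rw_def rset_def Let_def by simp

lemma rset_fin: "finite (rset w s e c)" unfolding rset_def by (rule finite_subset[of _ "{..length w}"]) auto

lemma B0:
  assumes i: "1 < i" "i \<le> length w" and S: "Sw w i = s" and E: "Ew w i = e"
    and ly: "LYw w c i (Lw w i)" and f: "fw w s e = c" and D2: "2 \<le> Dw w i"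
  shows "\<exists>b. b \<in> rset w s e (\<not>c) \<and> b < i"
proof -
  have disj: "j \<notin> rset w s e True \<or> j \<notin> rset w s e False" for j
  proof (rule ccontr)
    assume "\<not> (j \<notin> rset w s e True \<or> j \<notin> rset w s e False)"
    then have j: "1 < j" "j \<le> length w" "Sw w j = s" "Ew w j = e" "LYw w True j (Lw w j)" "LYw w False j (Lw w j)"
      unfolding rset_def by auto
    have "Dw w j = Dw w i" using sameR_D[of i w j] i j S E by auto
    then have "j < Lw w j" using D2 Lw_Dw[of j w] j by auto
    then show False using LY_both[of j "Lw w j" w True] j Lw_props[of j w] by auto
  qed
  have iin: "i \<in> rset w s e c" unfolding rset_def using i S E ly by auto
  have lp: "least_period (fac w s e) \<noteq> 1" using D_lp[of i w] i S E D2 by auto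
  show ?thesis
  proof (cases c)
    case True
    then have "\<not> (rw w s e True \<le> rw w s e False)" using f lp unfolding fw_def by (auto split: if_splits)
    then have lt: "rw w s e False < rw w s e True" by auto
    have neT: "rset w s e True \<noteq> {}" using iin True by auto
    have mT: "Min (rset w s e True) \<le> i" using Min_le[OF rset_fin] iin True by auto
    have neF: "rset w s e False \<noteq> {}" using lt neT by (auto simp: rw_rset split: if_splits)
    have "Min (rset w s e False) < Min (rset w s e True)" using lt neT neF by (simp add: rw_rset)
    moreover have "Min (rset w s e False) \<in> rset w s e False" using Min_in[OF rset_fin neF] .
    ultimately show ?thesis using True mT by (intro exI[of _ "Min (rset w s e False)"]) auto
  next
    case False
    then have le: "rw w s e True \<le> rw w s e False" using f lp unfolding fw_def by (auto split: if_splits)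
    have neF: "rset w s e False \<noteq> {}" using iin False by auto
    have mF: "Min (rset w s e False) \<le> i" using Min_le[OF rset_fin] iin False by auto
    have neT: "rset w s e True \<noteq> {}" using le neF by (auto simp: rw_rset split: if_splits)
    have "Min (rset w s e True) \<le> Min (rset w s e False)" using le neT neF by (simp add: rw_rset)
    moreover have mi: "Min (rset w s e True) \<in> rset w s e True" using Min_in[OF rset_fin neT] .
    moreover have "Min (rset w s e True) \<noteq> i" using disj[of i] iin False mi by auto
    ultimately show ?thesis using False mF by (intro exI[of _ "Min (rset w s e True)"]) auto
  qed
qed

lemma JMAP:
  assumes i: "1 < i" "i \<le> length w" and S: "Sw w i = S" and E: "Ew w i = length w"
    and Si: "S < i" and iD: "i + Dw w i \<le> length w" and D2: "2 \<le> Dw w i"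
    and f: "fw w S (length w) = cw w i"
  shows "\<exists>j. 2 \<le> j \<and> j < i \<and> i < j + Dw w i \<and> S < j \<and> Lw w j = j + Dw w i - 1 \<and> Sw w j = S
     \<and> Ew w j = length w \<and> LYw w (\<not> cw w i) j (j + Dw w i - 1) \<and> cw w j = (\<not> cw w i) \<and> \<not> lost w j"
proof -
  define c where "c = cw w i"
  define D where "D = Dw w i"
  define n where "n = length w"
  have i1: "1 \<le> i" using i by auto
  have Li: "Lw w i = i + D - 1" using Lw_Dw[OF i1 i(2)] D_def by simp
  have lyi: "LYw w c i (i + D - 1)" using Lw_props(3)[OF i1 i(2)] Li c_def by simp
  obtain b0 where b0: "b0 \<in> rset w S n (\<not>c)" "b0 < i"
    using B0[OF i S E[folded n_def] Lw_props(3)[OF i1 i(2)]] f D2 c_def n_def by auto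
  have b: "1 < b0" "b0 \<le> n" "Sw w b0 = S" "Ew w b0 = n" "LYw w (\<not>c) b0 (Lw w b0)"
    using b0 unfolding rset_def n_def by auto
  have b1: "1 \<le> b0" using b by auto
  have Db: "Dw w b0 = D" using sameR_D[OF i1 i(2) b1 b(2)[unfolded n_def]] b S E D_def n_def by auto
  have Lb: "Lw w b0 = b0 + D - 1" using Lw_Dw[OF b1 b(2)[unfolded n_def]] Db by simp
  have lyb: "LYw w (\<not>c) b0 (b0 + D - 1)" using b(5) Lb by simp
  have per: "pp w D S n" using SE_pp[OF i1 i(2)] S E D_def n_def by simp
  have Sb: "S \<le> b0" using Sw_props(2)[OF b1 b(2)[unfolded n_def]] b by simp
  have S1: "1 \<le> S" using Sw_props(1)[OF i1 i(2)] S by simp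
  have bS: "S < b0"
  proof (rule ccontr)
    assume "\<not> S < b0"
    then have eq: "b0 = S" using Sb by simp
    then have "letter w (S - 1) \<noteq> letter w (S - 1 + D)" using Sw_props(4)[OF b1 b(2)[unfolded n_def]] b Db by auto
    moreover have "letter w (b0 + D - 1) = c"
    proof -
      have pre1: "b0 < b0 + D - 1" using D2 D_def by auto
      have pre2: "b0 + D - 1 \<le> length w" using Lb Lw_props(2)[OF b1 b(2)[unfolded n_def]] by simp
      show ?thesis using LY_ends[OF b1 pre1 pre2 lyb] by simp
    qed
    moreover have "cw w b0 = (\<not>c)" using LY_both'[OF b1 _ _ Lw_props(3)[OF b1 b(2)[unfolded n_def]] b(5)]
        Lb D2 D_def Lw_props(2)[OF b1 b(2)[unfolded n_def]] by auto
    then have "letter w (b0 - 1) = c" unfolding cw_def by auto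
    moreover have "S - 1 + D = b0 + D - 1" using eq S1 D2 D_def by auto
    ultimately show False using eq by simp
  qed
  define j where "j = i - (i - b0) mod D"
  have D1: "1 \<le> D" using D2 D_def by simp
  have md: "(i - b0) mod D \<le> i - b0" by (rule mod_less_eq_dividend)
  have jle: "b0 \<le> j" "j \<le> i" unfolding j_def using b0(2) md by arith+
  have jle1: "b0 \<le> j" using jle by simp
  have jdvd: "D dvd (j - b0)"
  proof -
    have "j - b0 = (i - b0) - (i - b0) mod D" unfolding j_def using b0(2) by (simp add: mod_less_eq_dividend)
    also have "\<dots> = D * ((i - b0) div D)" by (simp add: minus_mod_eq_mult_div)
    finally show ?thesis by simp
  qed
  have ml: "(i - b0) mod D < D" using D1 by simp
  have ij: "i < j + D" unfolding j_def using ml md b0(2) by arith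
  have win: "letter w (b0 + t) = letter w (j + t)" if "t \<le> D - 1" for t
    by (rule pp_mod[OF per]) (use that Sb jle1 jle ij iD jdvd D_def n_def in auto)
  have facj: "fac w b0 (b0 + D - 1) = fac w j (j + (b0 + D - 1 - b0))"
    by (rule fac_transfer) (use b1 b jle1 jle iD D_def n_def win D1 in auto)
  have jn: "j + D - 1 \<le> n" using jle iD D_def n_def by auto
  have lyj: "LYw w (\<not>c) j (j + D - 1)" using lyb facj D1 by (simp add: add.commute)
  have j1: "1 \<le> j" using jle1 b by auto
  have jneq: "j \<noteq> i"
  proof
    assume "j = i"
    moreover have "i < i + D - 1" using D2 D_def by simp
    ultimately show False using LY_both[OF i1 _ _ lyi] lyj jn n_def by auto
  qed
  then have ji: "j < i" using jle by auto
  have cwj: "cw w j = (\<not>c)"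
  proof -
    have "letter w (j - 1) = letter w (j - 1 + D)" using per bS jle1 jn unfolding pp_def by auto
    moreover have "letter w (j + D - 1) = c" using LY_ends[OF j1 _ _ lyj] D2 D_def jn n_def by auto
    moreover have "j - 1 + D = j + D - 1" using j1 by auto
    ultimately show ?thesis unfolding cw_def by simp
  qed
  have Lj: "Lw w j = j + D - 1"
    by (rule LR[of j D n w]) (use j1 D1 jn n_def lyj cwj pp_mono[OF per] bS jle1 in auto)
  have jlen: "j \<le> length w" using jn D1 n_def by simp
  have RSj: "Sw w j = S" "Ew w j = n"
    using RS(2,3)[OF i1 i(2) j1 jlen] Lj jn S E D_def n_def bS jle1 by auto
  have notlost: "\<not> lost w j"
  proof
    assume "lost w j"
    then have "LYw w c j (j + D - 1)" using RSj Lj f E S D_def n_def c_def unfolding lost_def by auto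
    moreover have "j < j + D - 1" using D2 D_def by simp
    ultimately show False using LY_both[OF j1 _ _ _ lyj] jn n_def by auto
  qed
  show ?thesis
    using jle1 b ji ij bS Lj RSj lyj cwj notlost D_def c_def n_def by (intro exI[of _ j]) auto
qed

lemma letter_shift:
  assumes "1 \<le> k" "k \<le> length w"
  shows "letter (w1 @ w @ w2) (length w1 + k) = letter w k"
proof -
  have e: "length w1 + k - 1 = length w1 + (k - 1)" using assms by simp
  have "(w1 @ w @ w2) ! (length w1 + (k - 1)) = (w @ w2) ! (k - 1)" by (rule nth_append_length_plus)
  also have "\<dots> = w ! (k - 1)" using assms by (intro nth_append_left) simp
  finally show ?thesis unfolding letter_def e .
qed

lemma fac_shift:
  assumes "1 \<le> i" "i \<le> j" "j \<le> length w"
  shows "fac (w1 @ w @ w2) (length w1 + i) (length w1 + j) = fac w i j"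
proof -
  have "fac w i j = fac (w1 @ w @ w2) (length w1 + i) (length w1 + i + (j - i))"
  proof (rule fac_transfer)
    fix s assume "s \<le> j - i"
    then show "letter w (i + s) = letter (w1 @ w @ w2) (length w1 + i + s)"
      using letter_shift[of "i+s" w w1 w2] assms by (simp add: add.assoc)
  qed (use assms in auto)
  then show ?thesis using assms by simp
qed

lemma pp_shift:
  assumes "1 \<le> x" "y \<le> length w"
  shows "pp (w1 @ w @ w2) D (length w1 + x) (length w1 + y) \<longleftrightarrow> pp w D x y"
proof
  assume P: "pp (w1 @ w @ w2) D (length w1 + x) (length w1 + y)"
  show "pp w D x y" unfolding pp_def
  proof (intro allI impI)
    fix k assume k: "x \<le> k" "k + D \<le> y"
    have "letter (w1 @ w @ w2) (length w1 + k) = letter (w1 @ w @ w2) (length w1 + k + D)"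
      using P k unfolding pp_def by auto
    then show "letter w k = letter w (k + D)"
      using letter_shift[of k w w1 w2] letter_shift[of "k+D" w w1 w2] k assms by (simp add: add.assoc)
  qed
next
  assume P: "pp w D x y"
  show "pp (w1 @ w @ w2) D (length w1 + x) (length w1 + y)" unfolding pp_def
  proof (intro allI impI)
    fix k assume k: "length w1 + x \<le> k" "k + D \<le> length w1 + y"
    define k' where "k' = k - length w1"
    have kk: "k = length w1 + k'" "x \<le> k'" "k' + D \<le> y" using k unfolding k'_def by auto
    have "letter w k' = letter w (k' + D)" using P kk unfolding pp_def by auto
    then show "letter (w1 @ w @ w2) k = letter (w1 @ w @ w2) (k + D)"
      using letter_shift[of k' w w1 w2] letter_shift[of "k'+D" w w1 w2] kk assms by (simp add: add.assoc)
  qed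
qed

lemma cw_shift:
  assumes "2 \<le> i" "i \<le> length w"
  shows "cw (w1 @ w @ w2) (length w1 + i) = cw w i"
proof -
  have "length w1 + i - 1 = length w1 + (i - 1)" using assms by simp
  then show ?thesis unfolding cw_def using letter_shift[of "i - 1" w w1 w2] assms by simp
qed

lemma Lw_shift:
  assumes "2 \<le> i" "i \<le> length w"
  shows "Lw (w1 @ w @ w2) (length w1 + i) = length w1 + Lw w i \<or> length w1 + length w < Lw (w1 @ w @ w2) (length w1 + i)"
proof -
  let ?W = "w1 @ w @ w2"
  let ?o = "length w1"
  have i1: "1 \<le> i" using assms by simp
  have W1: "1 \<le> ?o + i" "?o + i \<le> length ?W" using assms by auto
  have L: "i \<le> Lw w i" "Lw w i \<le> length w" "LYw w (cw w i) i (Lw w i)" using Lw_props[OF i1 assms(2)] by auto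
  have LW: "?o + i \<le> Lw ?W (?o + i)" "Lw ?W (?o + i) \<le> length ?W" "LYw ?W (cw ?W (?o+i)) (?o+i) (Lw ?W (?o + i))"
    using Lw_props[OF W1] by auto
  have ge: "?o + Lw w i \<le> Lw ?W (?o + i)"
  proof (rule ccontr)
    assume "\<not> ?o + Lw w i \<le> Lw ?W (?o + i)"
    then have "\<not> LYw ?W (cw ?W (?o+i)) (?o+i) (?o + Lw w i)" using Lw_max[OF W1] L by auto
    then show False using fac_shift[of i "Lw w i" w w1 w2] cw_shift[OF assms, of w1 w2] L i1 by simp
  qed
  show ?thesis
  proof (cases "Lw ?W (?o + i) \<le> ?o + length w")
    case True
    define m where "m = Lw ?W (?o + i) - ?o"
    have m: "Lw ?W (?o + i) = ?o + m" "i \<le> m" "m \<le> length w" using LW True unfolding m_def by auto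
    have "LYw w (cw w i) i m" using LW(3) m fac_shift[of i m w w1 w2] cw_shift[OF assms, of w1 w2] i1 by simp
    then have "m \<le> Lw w i" using Lw_max[OF i1 assms(2), of m] m by (meson not_le)
    then show ?thesis using ge m by auto
  next
    case False then show ?thesis by auto
  qed
qed

lemma lost_iff:
  assumes "1 < i" "i \<le> length w"
  shows "lost w i \<longleftrightarrow>
    ((Ew w i < length w \<and> 1 < Sw w i \<and> \<not> 2 * Dw w i \<le> Ew w i - Sw w i + 1) \<or>
     (Ew w i < length w \<and> 2 * Dw w i \<le> Ew w i - Sw w i + 1 \<and> i + Dw w i \<le> Ew w i) \<or>
     (Ew w i = length w \<and> 2 * Dw w i \<le> Ew w i - Sw w i + 1 \<and> i + Dw w i \<le> Ew w i \<and> Sw w i < i \<and>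
        LYw w (fw w (Sw w i) (Ew w i)) i (Lw w i)))"
  unfolding lost_def using RUN_iff[of i w] assms by auto

lemma lost_range: "lost w i \<Longrightarrow> 1 < i \<and> i < length w"
proof -
  assume l: "lost w i"
  then have i: "1 < i" "i \<le> length w" unfolding lost_def by auto
  have "i < length w"
  proof (rule ccontr)
    assume "\<not> i < length w"
    then have "i = length w" using i by auto
    moreover have "i \<le> Ew w i" using Ew_props(1)[of i w] Lw_props(1)[of i w] i by auto
    moreover have "Ew w i \<le> length w" using Ew_props(2)[of i w] i by auto
    ultimately show False using l[unfolded lost_iff[OF i]] Dw_pos[of w i] by auto
  qed
  then show ?thesis using i by auto
qed

lemma MONO:
  fixes A :: "nat set"
  assumes "finite A"
  shows "inj_on \<phi> A \<Longrightarrow> (\<forall>a\<in>A. \<phi> a \<le> a) \<Longrightarrow> \<exists>\<mu>. strict_mono_on A \<mu> \<and> (\<forall>a\<in>A. \<mu> a \<in> \<phi> ` A \<and> \<mu> a \<le> a)"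
  using assms
proof (induction A arbitrary: \<phi> rule: finite_linorder_max_induct)
  case empty
  then show ?case by (auto intro: strict_mono_onI)
next
  case (insert b A)
  define A' where "A' = insert b A"
  have fin: "finite (\<phi> ` A')" using insert unfolding A'_def by auto
  define m where "m = Max (\<phi> ` A')"
  have bA: "b \<notin> A" using insert by auto
  have mge: "\<phi> x \<le> m" if "x \<in> A'" for x unfolding m_def using Max_ge[OF fin] that by auto
  have min: "m \<in> \<phi> ` A'" unfolding m_def using Max_in[OF fin] A'_def by auto
  define \<phi>' where "\<phi>' x = (if \<phi> x = m then \<phi> b else \<phi> x)" for x
  have inj: "inj_on \<phi> A'" using insert A'_def by auto
  have ne: "\<phi> x \<noteq> \<phi> b" if "x \<in> A" for x
  proof
    assume "\<phi> x = \<phi> b"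
    then have "x = b" using inj_onD[OF inj] that A'_def by auto
    then show False using that bA by auto
  qed
  have inj': "inj_on \<phi>' A"
  proof (rule inj_onI)
    fix x y assume xy: "x \<in> A" "y \<in> A" "\<phi>' x = \<phi>' y"
    show "x = y"
    proof (cases "\<phi> x = m"; cases "\<phi> y = m")
      assume "\<phi> x = m" "\<phi> y = m" then show ?thesis using inj_onD[OF inj] xy A'_def by auto
    next
      assume "\<phi> x = m" "\<phi> y \<noteq> m" then show ?thesis using xy ne[of y] unfolding \<phi>'_def by auto
    next
      assume "\<phi> x \<noteq> m" "\<phi> y = m" then show ?thesis using xy ne[of x] unfolding \<phi>'_def by auto
    next
      assume "\<phi> x \<noteq> m" "\<phi> y \<noteq> m" then show ?thesis using inj_onD[OF inj] xy A'_def unfolding \<phi>'_def by auto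
    qed
  qed
  have le': "\<forall>a\<in>A. \<phi>' a \<le> a"
  proof
    fix a assume a: "a \<in> A"
    show "\<phi>' a \<le> a"
    proof (cases "\<phi> a = m")
      case True
      then have "\<phi> b \<le> \<phi> a" using mge[of b] A'_def by auto
      then show ?thesis using True insert.prems(2) a unfolding \<phi>'_def by force
    next
      case False then show ?thesis using insert.prems(2) a unfolding \<phi>'_def by auto
    qed
  qed
  obtain \<mu>' where mu': "strict_mono_on A \<mu>'" "\<forall>a\<in>A. \<mu>' a \<in> \<phi>' ` A \<and> \<mu>' a \<le> a"
    using insert.IH[OF inj' le'] by blast
  have img: "\<phi>' x \<in> \<phi> ` A' \<and> \<phi>' x < m" if "x \<in> A" for x
  proof -
    have "\<phi>' x \<in> \<phi> ` A'" unfolding \<phi>'_def using that A'_def by auto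
    moreover have "\<phi>' x \<noteq> m" using ne[OF that] unfolding \<phi>'_def by auto
    moreover have "\<phi>' x \<le> m" unfolding \<phi>'_def using mge[of b] mge[of x] that A'_def by auto
    ultimately show ?thesis by auto
  qed
  define \<mu> where "\<mu> = \<mu>'(b := m)"
  have "strict_mono_on A' \<mu>"
  proof (rule strict_mono_onI)
    fix r s assume rs: "r \<in> A'" "s \<in> A'" "r < s"
    show "\<mu> r < \<mu> s"
    proof (cases "s = b")
      case True
      then have "r \<in> A" using rs A'_def by auto
      then show ?thesis using mu'(2) img True rs unfolding \<mu>_def by fastforce
    next
      case False
      then have s: "s \<in> A" using rs A'_def by auto
      then have "r \<noteq> b" using insert.hyps(2) rs by auto
      then have "r \<in> A" using rs A'_def by auto
      then show ?thesis using strict_mono_onD[OF mu'(1) _ s rs(3)] False \<open>r \<noteq> b\<close> unfolding \<mu>_def by auto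
    qed
  qed
  moreover have "\<forall>a\<in>A'. \<mu> a \<in> \<phi> ` A' \<and> \<mu> a \<le> a"
  proof
    fix a assume a: "a \<in> A'"
    show "\<mu> a \<in> \<phi> ` A' \<and> \<mu> a \<le> a"
    proof (cases "a = b")
      case True
      obtain x where x: "x \<in> A'" "m = \<phi> x" using min by auto
      have "x \<le> b" using x insert.hyps(2) A'_def by auto
      then have "m \<le> b" using x insert.prems(2) A'_def by fastforce
      then show ?thesis using True min unfolding \<mu>_def by auto
    next
      case False
      then have "a \<in> A" using a A'_def by auto
      then show ?thesis using mu'(2) img False unfolding \<mu>_def by fastforce
    qed
  qed
  ultimately show ?case unfolding A'_def by blast
qed

lemma MAIN:
  assumes li: "lost w i" and nl: "\<not> lost (w1 @ w @ w2) (length w1 + i)"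
  shows "\<exists>j. 2 \<le> j \<and> j < i \<and> i < j + Dw w i \<and> Sw w j = Sw w i \<and> Ew w j = length w \<and> Ew w i = length w
     \<and> i + Dw w i \<le> length w \<and> Lw w j = j + Dw w i - 1 \<and> LYw w (\<not> cw w i) j (j + Dw w i - 1)
     \<and> 2 \<le> Dw w i \<and> \<not> lost w j \<and> lost (w1 @ w @ w2) (length w1 + j)"
proof -
  define W where "W = w1 @ w @ w2"
  define off where "off = length w1"
  define n where "n = length w"
  define N where "N = length W"
  have NN: "N = off + n + length w2" unfolding N_def W_def off_def n_def by simp
  have i: "1 < i" "i \<le> n" using li unfolding lost_def n_def by auto
  have i1: "1 \<le> i" and i2: "2 \<le> i" using i by auto
  define c where "c = cw w i"
  define L where "L = Lw w i"
  define D where "D = Dw w i"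
  define S where "S = Sw w i"
  define E where "E = Ew w i"
  have Lp: "i \<le> L" "L \<le> n" "LYw w c i L" using Lw_props[OF i1 i(2)[unfolded n_def]] unfolding L_def c_def n_def by auto
  have LD: "L = i + D - 1" unfolding L_def D_def using Lw_Dw[OF i1 i(2)[unfolded n_def]] .
  have D1: "1 \<le> D" unfolding D_def by (rule Dw_pos)
  have Sp: "1 \<le> S" "S \<le> i" "pp w D S L" "S = 1 \<or> letter w (S - 1) \<noteq> letter w (S - 1 + D)"
    using Sw_props[OF i1 i(2)[unfolded n_def]] unfolding S_def D_def L_def by auto
  have Ep: "L \<le> E" "E \<le> n" "pp w D i E" "E = n \<or> letter w (E + 1) \<noteq> letter w (E + 1 - D)"
    using Ew_props[OF i1 i(2)[unfolded n_def]] unfolding E_def D_def L_def n_def by auto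
  have SEp: "pp w D S E" using SE_pp[OF i1 i(2)[unfolded n_def]] unfolding S_def D_def E_def .
  have lost_w: "(E < n \<and> 1 < S \<and> \<not> 2 * D \<le> E - S + 1) \<or> (E < n \<and> 2 * D \<le> E - S + 1 \<and> i + D \<le> E) \<or>
     (E = n \<and> 2 * D \<le> E - S + 1 \<and> i + D \<le> E \<and> S < i \<and> LYw w (fw w S E) i L)"
    using li[unfolded lost_iff[OF i(1) i(2)[unfolded n_def]]] unfolding E_def S_def D_def L_def n_def .
  define i' where "i' = off + i"
  have i': "1 < i'" "i' \<le> N" using i NN unfolding i'_def by auto
  have i'1: "1 \<le> i'" using i' by auto
  have cW: "cw W i' = c" unfolding W_def i'_def off_def c_def using cw_shift[OF i2 i(2)[unfolded n_def]] .
  have letW: "letter W (off + k) = letter w k" if "1 \<le> k" "k \<le> n" for k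
    unfolding W_def off_def using letter_shift that n_def by auto
  have letW': "letter W x = letter w k" if "1 \<le> k" "k \<le> n" "x = off + k" for k x
    using letW that by simp
  have facW: "fac W (off + a) (off + b) = fac w a b" if "1 \<le> a" "a \<le> b" "b \<le> n" for a b
    unfolding W_def off_def using fac_shift that n_def by auto
  have ppW: "pp W D' (off + a) (off + b) \<longleftrightarrow> pp w D' a b" if "1 \<le> a" "b \<le> n" for a b D'
    unfolding W_def off_def using pp_shift that n_def by auto
  have nlW: "\<not> ((Ew W i' < N \<and> 1 < Sw W i' \<and> \<not> 2 * Dw W i' \<le> Ew W i' - Sw W i' + 1) \<or>
     (Ew W i' < N \<and> 2 * Dw W i' \<le> Ew W i' - Sw W i' + 1 \<and> i' + Dw W i' \<le> Ew W i') \<or>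
     (Ew W i' = N \<and> 2 * Dw W i' \<le> Ew W i' - Sw W i' + 1 \<and> i' + Dw W i' \<le> Ew W i' \<and> Sw W i' < i' \<and>
        LYw W (fw W (Sw W i') (Ew W i')) i' (Lw W i')))"
    using nl lost_iff[OF i'(1) i'(2)[unfolded N_def]] unfolding W_def[symmetric] i'_def[symmetric] off_def[symmetric] N_def by auto

  have fsym: "\<And>f. LYw W f i' (off + L) \<longleftrightarrow> LYw w f i L"
    using facW[of i L] Lp i1 unfolding i'_def by auto
  consider (A) "Lw W i' = off + L" | (B) "off + n < Lw W i'"
    using Lw_shift[OF i2 i(2)[unfolded n_def], of w1 w2] unfolding W_def[symmetric] off_def[symmetric] n_def[symmetric] i'_def[symmetric] L_def by auto
  then show ?thesis
  proof cases
    case A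
    have DW: "Dw W i' = D" using A unfolding Dw_def D_def i'_def L_def by simp
    have LW: "Lw W i' = i' + D - 1" using A LD D1 unfolding i'_def by simp
    have SW: "Sw W i' \<le> off + S"
    proof (rule Sw_le[OF i'1 i'(2)[unfolded N_def]])
      show "1 \<le> off + S" using Sp by simp
      show "pp W (Dw W i') (off + S) (Lw W i')" unfolding DW A using ppW[of S L D] Sp Lp by simp
    qed
    have SW1: "Sw W i' = off + S" if "1 < S"
    proof (rule Sw_eqI[OF i'1 i'(2)[unfolded N_def]])
      show "1 \<le> off + S" "off + S \<le> i'" using Sp unfolding i'_def by auto
      show "pp W (Dw W i') (off + S) (Lw W i')" unfolding DW A using ppW[of S L D] Sp Lp by simp
      have "letter W (off + S - 1) = letter w (S - 1)" by (rule letW') (use that Sp i in auto)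
      moreover have "letter W (off + S - 1 + D) = letter w (S - 1 + D)" by (rule letW') (use that Sp Lp LD in auto)
      ultimately show "off + S = 1 \<or> letter W (off + S - 1) \<noteq> letter W (off + S - 1 + Dw W i')"
        using Sp that DW by auto
    qed
    have EW1: "Ew W i' = off + E" if "E < n"
    proof (rule Ew_eqI[OF i'1 i'(2)[unfolded N_def]])
      show "Lw W i' \<le> off + E" "off + E \<le> length W" using A Ep N_def NN by auto
      show "pp W (Dw W i') i' (off + E)" unfolding DW unfolding i'_def using ppW[of i E D] Ep i1 by simp
      have "letter W (off + E + 1) = letter w (E + 1)" by (rule letW') (use that in auto)
      moreover have "letter W (off + E + 1 - D) = letter w (E + 1 - D)" by (rule letW') (use that Ep LD i in auto)
      ultimately show "off + E = length W \<or> letter W (off + E + 1) \<noteq> letter W (off + E + 1 - Dw W i')"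
        using Ep that DW by auto
    qed
    have EW2: "off + n \<le> Ew W i'" if "E = n"
    proof (rule Ew_ge[OF i'1])
      show "i' \<le> off + n" "off + n \<le> length W" using i NN N_def unfolding i'_def by auto
      show "pp W (Dw W i') i' (off + n)" unfolding DW unfolding i'_def using ppW[of i n D] Ep that i1 by simp
    qed
    have EWN: "Ew W i' \<le> N" using Ew_props(2)[OF i'1 i'(2)[unfolded N_def]] N_def by simp
    have C3: "E = n \<and> 2 * D \<le> E - S + 1 \<and> i + D \<le> E \<and> S < i \<and> LYw w (fw w S E) i L"
    proof -
      have "\<not> (E < n \<and> 1 < S \<and> \<not> 2 * D \<le> E - S + 1)"
      proof
        assume h: "E < n \<and> 1 < S \<and> \<not> 2 * D \<le> E - S + 1"
        then have "Ew W i' < N \<and> 1 < Sw W i' \<and> \<not> 2 * Dw W i' \<le> Ew W i' - Sw W i' + 1"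
          using EW1 SW1 DW NN by auto
        then show False using nlW by blast
      qed
      moreover have "\<not> (E < n \<and> 2 * D \<le> E - S + 1 \<and> i + D \<le> E)"
      proof
        assume h: "E < n \<and> 2 * D \<le> E - S + 1 \<and> i + D \<le> E"
        then have "Ew W i' < N \<and> 2 * Dw W i' \<le> Ew W i' - Sw W i' + 1 \<and> i' + Dw W i' \<le> Ew W i'"
          using EW1 SW DW NN Sp Ep unfolding i'_def by auto
        then show False using nlW by blast
      qed
      ultimately show ?thesis using lost_w by blast
    qed
    have En: "E = n" and run: "2 * D \<le> n - S + 1" and iD: "i + D \<le> n" and Si: "S < i"
      and lyf: "LYw w (fw w S n) i L" using C3 by auto
    have EWn: "off + n \<le> Ew W i'" using EW2 En by simp
    have runW: "2 * Dw W i' \<le> Ew W i' - Sw W i' + 1" using EWn SW DW run Sp i Ep En by linarith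
    have iW: "i' + Dw W i' \<le> Ew W i'" using EWn DW iD unfolding i'_def by simp
    have SWi: "Sw W i' < i'" using SW Si unfolding i'_def by simp
    have EWN': "Ew W i' = N"
    proof (rule ccontr)
      assume "Ew W i' \<noteq> N"
      then have "Ew W i' < N" using EWN by simp
      then show False using nlW runW iW by blast
    qed
    have nLY: "\<not> LYw W (fw W (Sw W i') N) i' (Lw W i')" using nlW EWN' runW iW SWi by auto
    have nLY2: "\<not> LYw w (fw W (Sw W i') N) i L" using nLY fsym A by simp
    have D2: "2 \<le> D"
    proof (rule ccontr)
      assume "\<not> 2 \<le> D"
      then have "L = i" using LD D1 by simp
      then show False using nLY2 LY_single[OF i1 i(2)[unfolded n_def]] by simp
    qed
    have iL: "i < L" using LD D2 by simp
    have fc: "fw w S n = c" using LY_both'[OF i1 iL _ Lp(3) lyf] Lp n_def by simp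
    have fWc: "fw W (Sw W i') N = (\<not>c)" using nLY2 Lp(3) by (cases "fw W (Sw W i') N"; cases c) auto
    obtain j where j: "2 \<le> j" "j < i" "i < j + D" "S < j" "Lw w j = j + D - 1" "Sw w j = S"
      "Ew w j = n" "LYw w (\<not> c) j (j + D - 1)" "cw w j = (\<not> c)" "\<not> lost w j"
      using JMAP[OF i(1) i(2)[unfolded n_def] S_def[symmetric] En[unfolded E_def n_def] Si
         iD[unfolded D_def n_def] D2[unfolded D_def] fc[unfolded n_def c_def]]
      unfolding D_def[symmetric] c_def[symmetric] n_def[symmetric] by blast
    define j' where "j' = off + j"
    have jn: "j + D - 1 \<le> n" using j iD by linarith
    have j'1: "1 \<le> j'" and j'N: "j' \<le> N" using j jn NN D1 unfolding j'_def by auto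
    have cwj': "cw W j' = (\<not> c)" using cw_shift[of j w w1 w2] j jn D1 unfolding j'_def W_def off_def n_def by simp
    have LYj': "LYw W (\<not> c) j' (j' + D - 1)" using facW[of j "j + D - 1"] j jn D1 unfolding j'_def by (simp add: add.assoc)
    have ppi': "pp W D (Sw W i') N" using SE_pp[OF i'1 i'(2)[unfolded N_def]] DW EWN' N_def by simp
    have ppj': "pp W D j' N" by (rule pp_mono[OF ppi']) (use SW j in \<open>auto simp: j'_def\<close>)
    have Lj': "Lw W j' = j' + D - 1"
      by (rule LR[of j' D N W]) (use j'1 jn D1 NN N_def LYj' cwj' ppj' in \<open>auto simp: j'_def\<close>)
    have RSj: "Dw W j' = Dw W i'" "Sw W j' = Sw W i'" "Ew W j' = Ew W i'"
      using RS[OF i'1 i'(2)[unfolded N_def] j'1 j'N[unfolded N_def]] SW j Lj' DW EWN' jn NN unfolding j'_def by auto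
    have lostj': "lost W j'"
    proof -
      have "1 < j'" "j' \<le> length W" using j j'N N_def unfolding j'_def by auto
      moreover have "LYw W (fw W (Sw W j') (Ew W j')) j' (Lw W j')" using RSj EWN' fWc LYj' Lj' by simp
      moreover have "j' + Dw W j' \<le> Ew W j'" using RSj DW EWN' j iD NN unfolding j'_def by simp
      moreover have "Sw W j' < j'" using RSj SW j unfolding j'_def by simp
      ultimately show ?thesis using lost_iff[of j' W] RSj EWN' runW N_def by auto
    qed
    show ?thesis
      apply (rule exI[of _ j])
      using j lostj' En iD D2 unfolding j'_def W_def off_def D_def E_def n_def c_def S_def by auto
  next
    case B
    have LWN: "Lw W i' \<le> N" using Lw_props(2)[OF i'1 i'(2)[unfolded N_def]] N_def by simp
    have LYu: "LYw W c i' (Lw W i')" using Lw_props(3)[OF i'1 i'(2)[unfolded N_def]] cW by simp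
    have Di': "D \<le> Lw W i' - i'" using B LD Lp unfolding i'_def by linarith
    have "MMw W c i' (Lw W i') D" using LY_iff[of i' "Lw W i'" W c] LYu Di' D1 i'1 LWN N_def by auto
    then obtain k where k: "i' \<le> k" "k + D \<le> Lw W i'" "\<forall>x. i' \<le> x \<longrightarrow> x < k \<longrightarrow> letter W (x+D) = letter W x"
      "letter W k = c" "letter W (k+D) = (\<not>c)" unfolding MMw_def by blast
    have ppWi: "pp W D i' (off + E)" unfolding i'_def using ppW[of i E D] Ep i1 by simp
    have En: "E = n"
    proof (rule ccontr)
      assume "E \<noteq> n"
      then have En: "E < n" using Ep by simp
      then have br: "letter w (E + 1) \<noteq> letter w (E + 1 - D)" using Ep(4) by simp
      have k1: "\<not> k + D \<le> off + E"
      proof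
        assume "k + D \<le> off + E"
        then have "letter W k = letter W (k + D)" using ppWi k(1) unfolding pp_def by blast
        then show False using k by simp
      qed
      have x1: "i' \<le> off + E + 1 - D" using Ep LD unfolding i'_def by linarith
      have k2: "\<not> off + E + 1 - D < k"
      proof
        assume "off + E + 1 - D < k"
        then have "letter W (off + E + 1 - D + D) = letter W (off + E + 1 - D)" using k(3) x1 by blast
        moreover have "letter W (off + E + 1 - D + D) = letter w (E + 1)" by (rule letW') (use En D1 Ep LD i in auto)
        moreover have "letter W (off + E + 1 - D) = letter w (E + 1 - D)" by (rule letW') (use En Ep LD i in auto)
        ultimately show False using br by simp
      qed
      have kk: "k = off + E + 1 - D" using k1 k2 by linarith
      have c1: "letter w (E + 1 - D) = c" using k(4) letW'[of "E + 1 - D" k] kk En Ep LD i by auto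
      have c2: "letter w (E + 1) = (\<not>c)" using k(5) letW'[of "E + 1" "k + D"] kk En D1 Ep LD i by auto
      have "LYw w c i (E + 1)" by (rule Ly3[OF i1 Lp(1) Ep(1) _ Lp(3) _ Ep(3) c1 c2]) (use En LD D1 n_def in auto)
      moreover have "\<not> LYw w c i (E + 1)" using Lw_max[OF i1 i(2)[unfolded n_def], of "E + 1"] Ep En n_def
        unfolding c_def L_def by auto
      ultimately show False by simp
    qed
    have C3: "2 * D \<le> n - S + 1" "i + D \<le> n" "S < i" "LYw w (fw w S n) i L" using lost_w En by auto
    have kn: "off + n < k + D"
    proof (rule ccontr)
      assume "\<not> off + n < k + D"
      then have "letter W k = letter W (k + D)" using ppWi k(1) En unfolding pp_def by auto
      then show False using k by simp
    qed
    have D2: "2 \<le> D"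
    proof (rule ccontr)
      assume "\<not> 2 \<le> D"
      then have LI: "L = i" using LD D1 by simp
      have DD: "D = 1" using D1 \<open>\<not> 2 \<le> D\<close> by simp
      have "S \<le> i - 1" "i - 1 + D \<le> L" using C3(3) LI DD i by auto
      then have "letter w (i - 1) = letter w (i - 1 + D)" using Sp(3) unfolding pp_def by blast
      then have "letter w (i - 1) = letter w (i - 1 + 1)" using DD by simp
      then have "letter w (i - 1) = letter w i" using i by simp
      then have "c = (\<not> letter w i)" unfolding c_def cw_def by simp
      moreover have "i' < Lw W i'" using B i unfolding i'_def by simp
      then have "letter W i' = c" using LY_ends[OF i'1 _ LWN[unfolded N_def] LYu] by simp
      moreover have "letter W i' = letter w i" by (rule letW') (use i i'_def in auto)
      ultimately show False by simp
    qed
    have iL: "i < L" using LD D2 by simp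
    have fc: "fw w S n = c" using LY_both'[OF i1 iL _ Lp(3) C3(4)] Lp n_def by simp
    obtain j where j: "2 \<le> j" "j < i" "i < j + D" "S < j" "Lw w j = j + D - 1" "Sw w j = S"
      "Ew w j = n" "LYw w (\<not> c) j (j + D - 1)" "cw w j = (\<not> c)" "\<not> lost w j"
      using JMAP[OF i(1) i(2)[unfolded n_def] S_def[symmetric] En[unfolded E_def n_def] C3(3)
         C3(2)[unfolded D_def n_def] D2[unfolded D_def] fc[unfolded n_def c_def]]
      unfolding D_def[symmetric] c_def[symmetric] n_def[symmetric] by blast
    define j' where "j' = off + j"
    define e' where "e' = k + D - 1"
    have e': "off + n \<le> e'" "e' < N" "e' + 1 = k + D" "e' + 1 - D = k" using kn k LWN D1 unfolding e'_def by auto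
    have jn: "j + D - 1 \<le> n" using j C3 by linarith
    have j'1: "1 \<le> j'" and j'N: "j' \<le> N" using j jn NN D1 unfolding j'_def by auto
    have cwj': "cw W j' = (\<not> c)" using cw_shift[of j w w1 w2] j jn D1 unfolding j'_def W_def off_def n_def by simp
    have LYj': "LYw W (\<not> c) j' (j' + D - 1)" using facW[of j "j + D - 1"] j jn D1 unfolding j'_def by (simp add: add.assoc)
    have ppS: "pp W D (off + S) (off + n)" using ppW[of S n D] SEp En Sp by simp
    have ppA: "pp W D i' e'" unfolding pp_def
    proof (intro allI impI)
      fix x assume x: "i' \<le> x" "x + D \<le> e'"
      then have "x < k" using e' by linarith
      then show "letter W x = letter W (x + D)" using k(3) x by auto
    qed
    have ppU: "pp W D (off + S) e'" by (rule pp_union[OF ppS ppA]) (use Sp C3 in \<open>auto simp: i'_def\<close>)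
    have ppj': "pp W D j' e'" by (rule pp_mono[OF ppU]) (use j in \<open>auto simp: j'_def\<close>)
    have Lj': "Lw W j' = j' + D - 1"
    proof (rule LR[of j' D e' W])
      show "1 \<le> j'" "j' + D - 1 \<le> e'" "e' \<le> length W" "1 \<le> D" using j'1 jn e' D1 N_def unfolding j'_def by auto
      show "LYw W (cw W j') j' (j' + D - 1)" using LYj' cwj' by simp
      show "pp W D j' e'" by (rule ppj')
      show "e' = length W \<or> letter W (e' + 1) = cw W j' \<and> letter W (e' + 1 - D) \<noteq> cw W j'"
        using e' k cwj' by auto
    qed
    have DWj: "Dw W j' = D" unfolding Dw_def Lj' using D1 by simp
    have EWj: "Ew W j' = e'"
    proof (rule Ew_eqI[OF j'1 j'N[unfolded N_def]])
      show "Lw W j' \<le> e'" "e' \<le> length W" using Lj' jn e' N_def unfolding j'_def by auto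
      show "pp W (Dw W j') j' e'" using ppj' DWj by simp
      show "e' = length W \<or> letter W (e' + 1) \<noteq> letter W (e' + 1 - Dw W j')" using e' k DWj by auto
    qed
    have SWj: "Sw W j' \<le> off + S"
    proof (rule Sw_le[OF j'1 j'N[unfolded N_def]])
      show "1 \<le> off + S" using Sp by simp
      show "pp W (Dw W j') (off + S) (Lw W j')" using pp_mono[OF ppU, of "off + S" "Lw W j'"] DWj Lj' jn e'
        unfolding j'_def by auto
    qed
    have lostj': "lost W j'"
    proof -
      have "1 < j'" "j' \<le> length W" using j j'N N_def unfolding j'_def by auto
      moreover have "Ew W j' < length W" using EWj e' N_def by simp
      moreover have "2 * Dw W j' \<le> Ew W j' - Sw W j' + 1" using EWj DWj SWj e' C3(1) Sp by linarith
      moreover have "j' + Dw W j' \<le> Ew W j'" using EWj DWj e' j C3 unfolding j'_def by linarith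
      ultimately show ?thesis using lost_iff[of j' W] by auto
    qed
    show ?thesis
      apply (rule exI[of _ j])
      using j lostj' En C3 D2 unfolding j'_def W_def off_def D_def E_def n_def c_def S_def by auto
  qed
qed

definition Pj :: "word \<Rightarrow> word \<Rightarrow> word \<Rightarrow> nat \<Rightarrow> nat \<Rightarrow> bool" where
  "Pj w w1 w2 i j \<longleftrightarrow> 2 \<le> j \<and> j < i \<and> i < j + Dw w i \<and> Sw w j = Sw w i \<and> Ew w j = length w \<and> Ew w i = length w
     \<and> i + Dw w i \<le> length w \<and> Lw w j = j + Dw w i - 1 \<and> LYw w (\<not> cw w i) j (j + Dw w i - 1)
     \<and> 2 \<le> Dw w i \<and> \<not> lost w j \<and> lost (w1 @ w @ w2) (length w1 + j)"

lemma INJ: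
  assumes l1: "lost w i1" and l2: "lost w i2" and p1: "Pj w w1 w2 i1 j" and p2: "Pj w w1 w2 i2 j"
  shows "i1 = i2"
proof (rule ccontr)
  assume ne: "i1 \<noteq> i2"
  have r1: "1 < i1" "i1 \<le> length w" and r2: "1 < i2" "i2 \<le> length w" using l1 l2 unfolding lost_def by auto
  have a1: "1 \<le> i1" and a2: "1 \<le> i2" using r1 r2 by auto
  have j: "2 \<le> j" "j < i1" "i1 < j + Dw w i1" "Sw w j = Sw w i1" "Ew w j = length w" "Ew w i1 = length w"
     "i1 + Dw w i1 \<le> length w" "Lw w j = j + Dw w i1 - 1" "LYw w (\<not> cw w i1) j (j + Dw w i1 - 1)" "2 \<le> Dw w i1"
    using p1 unfolding Pj_def by auto
  have k: "j < i2" "i2 < j + Dw w i2" "Sw w j = Sw w i2" "Ew w i2 = length w"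
     "i2 + Dw w i2 \<le> length w" "LYw w (\<not> cw w i2) j (j + Dw w i2 - 1)"
    using p2 unfolding Pj_def by auto
  define D where "D = Dw w i1"
  have DD: "Dw w i2 = D" using sameR_D[OF a1 r1(2) a2 r2(2)] j k unfolding D_def by simp
  have j1: "1 \<le> j" using j by simp
  have jj: "j < j + D - 1" "j + D - 1 \<le> length w" using j D_def by auto
  have cc: "cw w i1 = cw w i2"
    using LY_both'[OF j1 jj j(9)[folded D_def] k(6)[unfolded DD]] by simp
  define c where "c = cw w i1"
  have ly: "LYw w c i (i + D - 1)" if "1 < i" "i \<le> length w" "Dw w i = D" "cw w i = c" for i
    using Lw_props(3)[of i w] Lw_Dw[of i w] that by auto
  have ly1: "LYw w c i1 (i1 + D - 1)" using ly[OF r1] D_def c_def by simp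
  have ly2: "LYw w c i2 (i2 + D - 1)" using ly[OF r2] DD cc c_def by simp
  have per: "pp w D (Sw w i1) (length w)" using SE_pp[OF a1 r1(2)] j D_def by simp
  have S1: "1 \<le> Sw w i1" "Sw w i1 \<le> i1" "Sw w i1 \<le> i2" using Sw_props[OF a1 r1(2)] Sw_props[OF a2 r2(2)] j k by auto
  show False
  proof (cases "i1 < i2")
    case True
    show False by (rule UNIQ[OF per S1(2) True _ _ _ S1(1) _ ly1 ly2]) (use j k DD D_def in auto)
  next
    case False
    then have "i2 < i1" using ne by auto
    show False by (rule UNIQ[OF per S1(3) \<open>i2 < i1\<close> _ _ _ S1(1) _ ly2 ly1]) (use j k DD D_def in auto)
  qed
qed

theorem lemma4:
  fixes w w1 w2 :: "bool list"
  shows "(\<forall>p. lost w p \<longrightarrow> 1 < p \<and> p < length w) \<and>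
         (\<exists>\<mu> :: nat \<Rightarrow> nat.
            strict_mono_on {p. lost w p} \<mu> \<and>
            (\<forall>p. lost w p \<longrightarrow>
                 1 \<le> \<mu> p \<and> \<mu> p \<le> length w - 1 \<and>
                 lost (w1 @ w @ w2) (length w1 + \<mu> p) \<and> \<mu> p \<le> p))"
proof -
  define A where "A = {p. lost w p}"
  have finA: "finite A" unfolding A_def
    by (rule finite_subset[of _ "{..length w}"]) (auto simp: lost_def)
  define \<phi> where "\<phi> p = (if lost (w1 @ w @ w2) (length w1 + p) then p else (SOME j. Pj w w1 w2 p j))" for p
  have Pex: "Pj w w1 w2 p (SOME j. Pj w w1 w2 p j)" if "lost w p" "\<not> lost (w1 @ w @ w2) (length w1 + p)" for p
  proof -
    have "\<exists>j. Pj w w1 w2 p j" using MAIN[OF that] unfolding Pj_def by blast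
    then show ?thesis by (rule someI_ex)
  qed
  have phi: "1 \<le> \<phi> p \<and> \<phi> p \<le> p \<and> lost (w1 @ w @ w2) (length w1 + \<phi> p)" if "p \<in> A" for p
  proof (cases "lost (w1 @ w @ w2) (length w1 + p)")
    case True then show ?thesis using that lost_range[of w p] unfolding \<phi>_def A_def by auto
  next
    case False
    then show ?thesis using Pex[of p] that unfolding \<phi>_def A_def Pj_def by auto
  qed
  have inj: "inj_on \<phi> A"
  proof (rule inj_onI)
    fix x y assume xy: "x \<in> A" "y \<in> A" "\<phi> x = \<phi> y"
    have lx: "lost w x" and ly: "lost w y" using xy A_def by auto
    show "x = y"
    proof (cases "lost (w1 @ w @ w2) (length w1 + x)"; cases "lost (w1 @ w @ w2) (length w1 + y)")
      assume "lost (w1 @ w @ w2) (length w1 + x)" "lost (w1 @ w @ w2) (length w1 + y)"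
      then show ?thesis using xy unfolding \<phi>_def by auto
    next
      assume a: "lost (w1 @ w @ w2) (length w1 + x)" "\<not> lost (w1 @ w @ w2) (length w1 + y)"
      then have "\<phi> y = (SOME j. Pj w w1 w2 y j)" "\<phi> x = x" unfolding \<phi>_def by auto
      then have "\<not> lost w x" using Pex[OF ly a(2)] xy unfolding Pj_def by auto
      then show ?thesis using lx by simp
    next
      assume a: "\<not> lost (w1 @ w @ w2) (length w1 + x)" "lost (w1 @ w @ w2) (length w1 + y)"
      then have "\<phi> x = (SOME j. Pj w w1 w2 x j)" "\<phi> y = y" unfolding \<phi>_def by auto
      then have "\<not> lost w y" using Pex[OF lx a(1)] xy unfolding Pj_def by auto
      then show ?thesis using ly by simp
    next
      assume a: "\<not> lost (w1 @ w @ w2) (length w1 + x)" "\<not> lost (w1 @ w @ w2) (length w1 + y)"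
      then have "Pj w w1 w2 x (\<phi> x)" "Pj w w1 w2 y (\<phi> x)" using Pex[OF lx a(1)] Pex[OF ly a(2)] xy(3)
        unfolding \<phi>_def by auto
      then show ?thesis using INJ[OF lx ly] by blast
    qed
  qed
  obtain \<mu> where mu: "strict_mono_on A \<mu>" "\<forall>a\<in>A. \<mu> a \<in> \<phi> ` A \<and> \<mu> a \<le> a"
    using MONO[OF finA inj] phi by blast
  have "\<forall>p. lost w p \<longrightarrow> 1 \<le> \<mu> p \<and> \<mu> p \<le> length w - 1 \<and> lost (w1 @ w @ w2) (length w1 + \<mu> p) \<and> \<mu> p \<le> p"
  proof (intro allI impI)
    fix p assume lp: "lost w p"
    then have pA: "p \<in> A" unfolding A_def by simp
    then obtain q where q: "q \<in> A" "\<mu> p = \<phi> q" "\<mu> p \<le> p" using mu(2) by blast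
    have "p < length w" using lost_range[OF lp] by simp
    then show "1 \<le> \<mu> p \<and> \<mu> p \<le> length w - 1 \<and> lost (w1 @ w @ w2) (length w1 + \<mu> p) \<and> \<mu> p \<le> p"
      using phi[OF q(1)] q by auto
  qed
  then show ?thesis using lost_range mu(1) unfolding A_def by blast
qed

end
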